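(* Every odometer $(X,T)$ is conjugate to a homeomorphism $\mathfrak{f}\colon C\to C$, where $C\subseteq\mathbb{R}$, such that $\mathfrak{f}'(x)=0$ for every $x\in C$ and $\mathfrak{f}$ extends to a differentiable surjection $\bar{\mathfrak{f}}\colon\mathbb{R}\to\mathbb{R}$.
   Context: A dynamical system is a pair $(X,T)$ with $X$ a compact metric space and $T\colon X\to X$ continuous. A point $x\in X$ is regularly recurrent if for every open $U\ni x$ there is $n\geq 1$ with $T^{in}(x)\in U$ for all $i=0,1,2,\ldots$. $(X,T)$ is equicontinuous if for every $\varepsilon>0$ there is $\delta>0$ such that $d(x,y)<\delta$ implies $d(T^n x,T^n y)<\varepsilon$ for all $n\geq 0$. $(X,T)$ is an odometer if it is equicontinuous and there is a regularly recurrent point whose orbit is dense in $X$. Two systems $(X,T)$, $(Y,S)$ are conjugate if there is a homeomorphism $h\colon X\to Y$ with $h\circ T=S\circ h$. For $C\subseteq\mathbb{R}$ and $f\colon C\to C$, the derivative at $x\in C$ is $f'(x)=\lim_{y\to x,\,y\in C\setminus\{x\}}\frac{f(y)-f(x)}{y-x}$. *)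

theory Defs
  imports "HOL-Analysis.Analysis"
begin

definition dynamical_system :: "'a::metric_space set \<Rightarrow> ('a \<Rightarrow> 'a) \<Rightarrow> bool" where
  "dynamical_system X T \<longleftrightarrow> compact X \<and> T ` X \<subseteq> X \<and> continuous_on X T"

definition regularly_recurrent :: "'a::metric_space set \<Rightarrow> ('a \<Rightarrow> 'a) \<Rightarrow> 'a \<Rightarrow> bool" where
  "regularly_recurrent X T x \<longleftrightarrow> x \<in> X \<and>
     (\<forall>U. openin (top_of_set X) U \<and> x \<in> U \<longrightarrow>
        (\<exists>n::nat. n \<ge> 1 \<and> (\<forall>i::nat. (T ^^ (i * n)) x \<in> U)))"

definition equicontinuous_sys :: "'a::metric_space set \<Rightarrow> ('a \<Rightarrow> 'a) \<Rightarrow> bool" where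
  "equicontinuous_sys X T \<longleftrightarrow>
     (\<forall>\<epsilon>>0. \<exists>\<delta>>0. \<forall>x\<in>X. \<forall>y\<in>X. dist x y < \<delta> \<longrightarrow>
        (\<forall>n::nat. dist ((T ^^ n) x) ((T ^^ n) y) < \<epsilon>))"

definition odometer :: "'a::metric_space set \<Rightarrow> ('a \<Rightarrow> 'a) \<Rightarrow> bool" where
  "odometer X T \<longleftrightarrow> dynamical_system X T \<and> equicontinuous_sys X T \<and>
     (\<exists>x\<in>X. regularly_recurrent X T x \<and> closure {(T ^^ n) x | n::nat. True} = X)"

end

theory Submission
  imports Defs
begin

lemma deriv0_from_est:
  fixes f :: "real \<Rightarrow> real"
  assumes "\<forall>e>0. \<exists>d>0. \<forall>y\<in>S. \<bar>y - x\<bar> < d \<longrightarrow> \<bar>f y - f x\<bar> \<le> e * \<bar>y - x\<bar>"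
  shows "(f has_field_derivative 0) (at x within S)"
  unfolding has_field_derivative_iff
proof (rule tendstoI)
  fix e :: real assume e: "e > 0"
  then obtain d where d: "d > 0" "\<forall>y\<in>S. \<bar>y - x\<bar> < d \<longrightarrow> \<bar>f y - f x\<bar> \<le> (e/2) * \<bar>y - x\<bar>"
    using assms by (meson half_gt_zero)
  show "\<forall>\<^sub>F y in at x within S. dist ((f y - f x) / (y - x)) 0 < e"
    unfolding eventually_at
  proof (intro exI[of _ d] conjI ballI impI)
    fix y assume y: "y \<in> S" "y \<noteq> x \<and> dist y x < d"
    then have "\<bar>f y - f x\<bar> \<le> (e/2) * \<bar>y - x\<bar>" using d by (simp add: dist_real_def)
    moreover have "\<bar>y - x\<bar> > 0" using y by simp
    ultimately have "\<bar>f y - f x\<bar> / \<bar>y - x\<bar> \<le> e/2" by (simp add: divide_le_eq)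
    moreover have "dist ((f y - f x) / (y - x)) 0 = \<bar>f y - f x\<bar> / \<bar>y - x\<bar>" by (simp add: dist_real_def abs_divide)
    ultimately show "dist ((f y - f x) / (y - x)) 0 < e" using e by linarith
  qed (use d in auto)
qed

definition sstep :: "real \<Rightarrow> real" where "sstep u = 3*u^2 - 2*u^3"

lemma sstep_bounds:
  assumes "0 \<le> u" "u \<le> 1"
  shows "0 \<le> sstep u" "sstep u \<le> 1" "sstep u \<le> 3*u^2" "sstep u \<le> 3*u"
proof -
  have "u^3 \<le> u^2" using assms by (simp add: power_decreasing)
  have "u^2 \<le> u" using assms by (simp add: power2_eq_square mult_left_le)
  have "0 \<le> u^3" using assms by simp
  have "u^2*(3 - 2*u) \<ge> 0" using assms by simp
  then show "0 \<le> sstep u" unfolding sstep_def by (simp add: algebra_simps power2_eq_square power3_eq_cube)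
  have "(1-u)^2*(1+2*u) \<ge> 0" using assms by simp
  then show "sstep u \<le> 1" unfolding sstep_def by (simp add: algebra_simps power2_eq_square power3_eq_cube)
  show "sstep u \<le> 3*u^2" unfolding sstep_def using \<open>0 \<le> u^3\<close> by linarith
  show "sstep u \<le> 3*u" unfolding sstep_def using \<open>0 \<le> u^3\<close> \<open>u^2 \<le> u\<close> by linarith
qed

lemma sstep_sym: "sstep (1 - u) = 1 - sstep u"
  unfolding sstep_def by (simp add: algebra_simps power2_eq_square power3_eq_cube)

lemma gap_est:
  fixes \<alpha> \<tau> \<beta> e A V Bb w :: real
  assumes "0 \<le> \<alpha>" "\<alpha> < \<tau>" "\<tau> < \<beta>" "e > 0" "\<bar>A\<bar> \<le> e*\<alpha>"
   and "\<bar>V\<bar> \<le> 2*e*\<beta> \<or> (\<bar>V\<bar> \<le> Bb \<and> w > 0 \<and> \<beta> - \<alpha> \<ge> w \<and> Bb * \<tau> \<le> e * w^2)"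
  shows "\<bar>A + V * sstep ((\<tau>-\<alpha>)/(\<beta>-\<alpha>))\<bar> \<le> 13*e*\<tau>"
proof -
  define u where "u = (\<tau>-\<alpha>)/(\<beta>-\<alpha>)"
  have ba: "\<beta> - \<alpha> > 0" using assms by simp
  have u0: "0 \<le> u" "u \<le> 1" unfolding u_def using assms by (auto simp: divide_le_eq)
  note sb = sstep_bounds[OF u0]
  have "e*\<alpha> \<le> e*\<tau>" using assms by (intro mult_left_mono) auto
  then have Ae: "\<bar>A\<bar> \<le> e*\<tau>" using assms by linarith
  have "\<bar>V * sstep u\<bar> \<le> 12*e*\<tau>"
  proof (cases "\<bar>V\<bar> \<le> 2*e*\<beta>")
    case True
    show ?thesis
    proof (cases "\<beta> - \<alpha> \<ge> \<beta>/2")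
      case True2: True
      have "\<bar>V * sstep u\<bar> = \<bar>V\<bar> * sstep u" using sb by (simp add: abs_mult)
      also have "\<dots> \<le> (2*e*\<beta>) * (3*u)" using True sb assms by (intro mult_mono) auto
      also have "3*u \<le> 3*(\<tau> / (\<beta>/2))"
      proof -
        have "u \<le> \<tau>/(\<beta>-\<alpha>)" unfolding u_def using assms ba by (intro divide_right_mono) auto
        also have "\<dots> \<le> \<tau>/(\<beta>/2)" using True2 assms by (intro divide_left_mono) auto
        finally show ?thesis by simp
      qed
      then have "(2*e*\<beta>) * (3*u) \<le> (2*e*\<beta>) * (3*(\<tau> / (\<beta>/2)))" using assms by (intro mult_left_mono) auto
      also have "\<dots> = 12*e*\<tau>" using assms by (simp add: field_simps)
      finally show ?thesis by simp
    next
      case False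
      have "\<bar>V * sstep u\<bar> \<le> \<bar>V\<bar>" using sb by (simp add: abs_mult mult_left_le)
      also have "\<dots> \<le> 2*e*\<beta>" by fact
      also have "\<dots> \<le> (2*e)*(2*\<alpha>)" using False assms by (intro mult_left_mono) auto
      also have "\<dots> \<le> (2*e)*(6*\<tau>)" using assms by (intro mult_left_mono) auto
      also have "\<dots> = 12*e*\<tau>" by simp
      finally show ?thesis .
    qed
  next
    case False
    then have H: "\<bar>V\<bar> \<le> Bb" "w > 0" "\<beta> - \<alpha> \<ge> w" "Bb * \<tau> \<le> e * w^2" using assms by auto
    have "u \<le> \<tau>/(\<beta>-\<alpha>)" unfolding u_def using assms ba by (intro divide_right_mono) auto
    also have "\<dots> \<le> \<tau>/w" using H assms by (intro divide_left_mono) auto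
    finally have "u \<le> \<tau>/w" .
    then have u2: "u^2 \<le> (\<tau>/w)^2" using u0 by (simp add: power_mono)
    have "\<bar>V * sstep u\<bar> = \<bar>V\<bar> * sstep u" using sb by (simp add: abs_mult)
    also have "\<dots> \<le> Bb * (3*u^2)" using H sb by (intro mult_mono) auto
    also have "\<dots> \<le> Bb * (3*(\<tau>/w)^2)" using H u2 by (intro mult_left_mono) auto
    also have "\<dots> = 3 * (Bb*\<tau>) * \<tau> / w^2" by (simp add: power2_eq_square field_simps)
    also have "\<dots> \<le> 3 * (e*w^2) * \<tau> / w^2" using H assms by (intro divide_right_mono mult_right_mono) auto
    also have "\<dots> = 3*e*\<tau>" using H by simp
    also have "\<dots> \<le> 12*e*\<tau>" using assms by simp
    finally show ?thesis .
  qed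
  moreover have "\<bar>A + V * sstep u\<bar> \<le> \<bar>A\<bar> + \<bar>V * sstep u\<bar>" by (rule abs_triangle_ineq)
  ultimately have "\<bar>A + V * sstep u\<bar> \<le> 13*e*\<tau>" using Ae by linarith
  then show ?thesis by (simp add: u_def)
qed

definition gl :: "real set \<Rightarrow> real \<Rightarrow> real" where "gl C t = Sup (C \<inter> {..t})"
definition gr :: "real set \<Rightarrow> real \<Rightarrow> real" where "gr C t = Inf (C \<inter> {t..})"
definition extF :: "real set \<Rightarrow> (real \<Rightarrow> real) \<Rightarrow> real \<Rightarrow> real" where
"extF C \<phi> t = (if t \<in> C then \<phi> t else if t < Inf C then \<phi> (Inf C) - (Inf C - t)^2
   else if Sup C < t then \<phi> (Sup C) + (t - Sup C)^2
   else \<phi> (gl C t) + (\<phi> (gr C t) - \<phi> (gl C t)) * sstep ((t - gl C t)/(gr C t - gl C t)))"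

context
  fixes C :: "real set" and \<phi> :: "real \<Rightarrow> real"
  assumes cC: "compact C" and neC: "C \<noteq> {}"
    and est: "\<forall>x\<in>C. \<forall>e>0. \<exists>d>0. \<forall>y\<in>C. \<bar>y - x\<bar> < d \<longrightarrow> \<bar>\<phi> y - \<phi> x\<bar> \<le> e * \<bar>y - x\<bar>"
begin

lemma clC: "closed C" using cC by (rule compact_imp_closed)
lemma bdaC: "bdd_above C" using cC by (simp add: bounded_imp_bdd_above compact_imp_bounded)
lemma bdbC: "bdd_below C" using cC by (simp add: bounded_imp_bdd_below compact_imp_bounded)
lemma InfC: "Inf C \<in> C" using neC bdbC clC by (rule closed_contains_Inf)
lemma SupC: "Sup C \<in> C" using neC bdaC clC by (rule closed_contains_Sup)
lemma InfC_le: "c \<in> C \<Longrightarrow> Inf C \<le> c" by (rule cInf_lower[OF _ bdbC])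
lemma SupC_ge: "c \<in> C \<Longrightarrow> c \<le> Sup C" by (rule cSup_upper[OF _ bdaC])

lemma gap:
  assumes "t \<notin> C" "Inf C < t" "t < Sup C"
  shows "gl C t \<in> C" "gr C t \<in> C" "gl C t < t" "t < gr C t" "\<forall>c\<in>C. c \<le> gl C t \<or> gr C t \<le> c"
proof -
  have ne1: "C \<inter> {..t} \<noteq> {}" using InfC assms by auto
  have ne2: "C \<inter> {t..} \<noteq> {}" using SupC assms by auto
  have b1: "bdd_above (C \<inter> {..t})" by auto
  have b2: "bdd_below (C \<inter> {t..})" by auto
  have c1: "closed (C \<inter> {..t})" using clC by (simp add: closed_Int)
  have c2: "closed (C \<inter> {t..})" using clC by (simp add: closed_Int)
  have m1: "gl C t \<in> C \<inter> {..t}" unfolding gl_def using ne1 b1 c1 by (rule closed_contains_Sup)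
  have m2: "gr C t \<in> C \<inter> {t..}" unfolding gr_def using ne2 b2 c2 by (rule closed_contains_Inf)
  show "gl C t \<in> C" "gr C t \<in> C" using m1 m2 by auto
  show "gl C t < t" "t < gr C t" using m1 m2 assms by (auto simp: order.order_iff_strict)
  show "\<forall>c\<in>C. c \<le> gl C t \<or> gr C t \<le> c"
  proof
    fix c assume c: "c \<in> C"
    show "c \<le> gl C t \<or> gr C t \<le> c"
    proof (cases "c \<le> t")
      case True then show ?thesis unfolding gl_def using c b1 by (auto intro: cSup_upper)
    next
      case False then show ?thesis unfolding gr_def using c b2 by (auto intro: cInf_lower)
    qed
  qed
qed

lemma gap_const:
  assumes "t \<notin> C" "Inf C < t" "t < Sup C" "gl C t < s" "s < gr C t"
  shows "s \<notin> C" "Inf C < s" "s < Sup C" "gl C s = gl C t" "gr C s = gr C t"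
proof -
  note g = gap[OF assms(1-3)]
  show "s \<notin> C" using g assms by force
  show "Inf C < s" using InfC_le[OF g(1)] assms by linarith
  show "s < Sup C" using SupC_ge[OF g(2)] assms by linarith
  have "C \<inter> {..s} = C \<inter> {..t}" using g assms by force
  then show "gl C s = gl C t" unfolding gl_def by simp
  have "C \<inter> {s..} = C \<inter> {t..}" using g assms by force
  then show "gr C s = gr C t" unfolding gr_def by simp
qed

lemma contC: "continuous_on C \<phi>"
  unfolding continuous_on_iff
proof (intro ballI allI impI)
  fix x e assume x: "x \<in> C" and e: "(0::real) < e"
  obtain d where d: "d > 0" "\<forall>y\<in>C. \<bar>y - x\<bar> < d \<longrightarrow> \<bar>\<phi> y - \<phi> x\<bar> \<le> 1 * \<bar>y - x\<bar>"
    using est x by (meson zero_less_one)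
  show "\<exists>d>0. \<forall>x'\<in>C. dist x' x < d \<longrightarrow> dist (\<phi> x') (\<phi> x) < e"
    using d e by (intro exI[of _ "min d e"]) (auto simp: dist_real_def)
qed

lemma boundC: "\<exists>B\<ge>0. \<forall>c\<in>C. \<bar>\<phi> c\<bar> \<le> B"
proof -
  have "bounded (\<phi> ` C)" using compact_continuous_image[OF contC cC] by (rule compact_imp_bounded)
  then obtain B where "\<forall>y\<in>\<phi> ` C. \<bar>y\<bar> \<le> B" unfolding bounded_real by blast
  then show ?thesis using neC by (intro exI[of _ B]) auto
qed

lemma extF_C: "x \<in> C \<Longrightarrow> extF C \<phi> x = \<phi> x" unfolding extF_def by simp

lemma extF_est:
  assumes x: "x \<in> C" and e: "e > 0"
  shows "\<exists>d>0. \<forall>t. \<bar>t - x\<bar> < d \<longrightarrow> \<bar>extF C \<phi> t - \<phi> x\<bar> \<le> 13*e*\<bar>t - x\<bar>"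
proof -
  obtain \<delta> where \<delta>: "\<delta> > 0" "\<forall>y\<in>C. \<bar>y - x\<bar> < \<delta> \<longrightarrow> \<bar>\<phi> y - \<phi> x\<bar> \<le> e * \<bar>y - x\<bar>"
    using est x e by blast
  obtain B where B: "B \<ge> 0" "\<forall>c\<in>C. \<bar>\<phi> c\<bar> \<le> B" using boundC by blast
  define d where "d = min (\<delta>/2) (min e (e*\<delta>^2/(4*(2*B+1))))"
  have d0: "d > 0" unfolding d_def using \<delta> e B by auto
  have dd: "d \<le> \<delta>/2" "d \<le> e" "d \<le> e*\<delta>^2/(4*(2*B+1))" unfolding d_def
    by (rule min.cobounded1, rule min.coboundedI2[OF min.cobounded1], rule min.coboundedI2[OF min.cobounded2])
  have main: "\<bar>extF C \<phi> t - \<phi> x\<bar> \<le> 13*e*\<bar>t - x\<bar>" if t: "\<bar>t - x\<bar> < d" for t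
  proof -
    have tx: "\<bar>t - x\<bar> < \<delta>" using t dd \<delta> by linarith
    consider "t \<in> C" | "t \<notin> C" "t < Inf C" | "t \<notin> C" "\<not> t < Inf C" "Sup C < t"
      | "t \<notin> C" "\<not> t < Inf C" "\<not> Sup C < t" by blast
    then show ?thesis
    proof cases
      case 1
      then have "\<bar>extF C \<phi> t - \<phi> x\<bar> \<le> e*\<bar>t - x\<bar>" using \<delta> tx extF_C by simp
      also have "\<dots> \<le> 13*e*\<bar>t - x\<bar>" using e by simp
      finally show ?thesis .
    next
      case 2
      have xi: "Inf C \<le> x" using InfC_le x .
      have ev: "extF C \<phi> t - \<phi> x = (\<phi> (Inf C) - \<phi> x) - (Inf C - t)^2" using 2 unfolding extF_def by simp
      have h1: "\<bar>\<phi> (Inf C) - \<phi> x\<bar> \<le> e * \<bar>t - x\<bar>"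
      proof -
        have "\<bar>Inf C - x\<bar> < \<delta>" using xi 2 tx by linarith
        then have "\<bar>\<phi> (Inf C) - \<phi> x\<bar> \<le> e*\<bar>Inf C - x\<bar>" using \<delta> InfC by blast
        also have "\<dots> \<le> e*\<bar>t - x\<bar>" using e xi 2 by (intro mult_left_mono) auto
        finally show ?thesis .
      qed
      have h2: "(Inf C - t)^2 \<le> e * \<bar>t - x\<bar>"
      proof -
        have "(Inf C - t)^2 = (Inf C - t)*(Inf C - t)" by (simp add: power2_eq_square)
        also have "\<dots> \<le> \<bar>t - x\<bar> * \<bar>t - x\<bar>" using xi 2 by (intro mult_mono) auto
        also have "\<dots> \<le> e * \<bar>t - x\<bar>" using t dd by (intro mult_right_mono) auto
        finally show ?thesis .
      qed
      have "\<bar>extF C \<phi> t - \<phi> x\<bar> \<le> \<bar>\<phi> (Inf C) - \<phi> x\<bar> + \<bar>(Inf C - t)^2\<bar>" unfolding ev by (rule abs_triangle_ineq4)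
      then have "\<bar>extF C \<phi> t - \<phi> x\<bar> \<le> 2*e*\<bar>t - x\<bar>" using h1 h2 by simp
      also have "\<dots> \<le> 13*e*\<bar>t - x\<bar>" using e by (intro mult_right_mono) auto
      finally show ?thesis .
    next
      case 3
      have xi: "x \<le> Sup C" using SupC_ge x .
      have ev: "extF C \<phi> t - \<phi> x = (\<phi> (Sup C) - \<phi> x) + (t - Sup C)^2" using 3 unfolding extF_def by simp
      have h1: "\<bar>\<phi> (Sup C) - \<phi> x\<bar> \<le> e * \<bar>t - x\<bar>"
      proof -
        have "\<bar>Sup C - x\<bar> < \<delta>" using xi 3 tx by linarith
        then have "\<bar>\<phi> (Sup C) - \<phi> x\<bar> \<le> e*\<bar>Sup C - x\<bar>" using \<delta> SupC by blast
        also have "\<dots> \<le> e*\<bar>t - x\<bar>" using e xi 3 by (intro mult_left_mono) auto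
        finally show ?thesis .
      qed
      have h2: "(t - Sup C)^2 \<le> e * \<bar>t - x\<bar>"
      proof -
        have "(t - Sup C)^2 = (t - Sup C)*(t - Sup C)" by (simp add: power2_eq_square)
        also have "\<dots> \<le> \<bar>t - x\<bar> * \<bar>t - x\<bar>" using xi 3 by (intro mult_mono) auto
        also have "\<dots> \<le> e * \<bar>t - x\<bar>" using t dd by (intro mult_right_mono) auto
        finally show ?thesis .
      qed
      have "\<bar>extF C \<phi> t - \<phi> x\<bar> \<le> \<bar>\<phi> (Sup C) - \<phi> x\<bar> + \<bar>(t - Sup C)^2\<bar>" unfolding ev by (rule abs_triangle_ineq)
      then have "\<bar>extF C \<phi> t - \<phi> x\<bar> \<le> 2*e*\<bar>t - x\<bar>" using h1 h2 by simp
      also have "\<dots> \<le> 13*e*\<bar>t - x\<bar>" using e by (intro mult_right_mono) auto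
      finally show ?thesis .
    next
      case 4
      have "t \<noteq> Inf C" "t \<noteq> Sup C" using 4(1) InfC SupC by auto
      then have it: "Inf C < t" "t < Sup C" using 4(2,3) by linarith+
      note g = gap[OF 4(1) it]
      define a where "a = gl C t"
      define b where "b = gr C t"
      have ab: "a \<in> C" "b \<in> C" "a < t" "t < b" using g unfolding a_def b_def by auto
      have ev: "extF C \<phi> t = \<phi> a + (\<phi> b - \<phi> a) * sstep ((t - a)/(b - a))"
        using 4 unfolding extF_def a_def b_def by simp
      have "\<bar>\<phi> b\<bar> \<le> B" "\<bar>\<phi> a\<bar> \<le> B" using B(2) ab(1,2) by auto
      then have V2: "\<bar>\<phi> b - \<phi> a\<bar> \<le> 2*B" using abs_triangle_ineq4[of "\<phi> b" "\<phi> a"] by linarith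
      have Bt: "(2*B) * \<bar>t - x\<bar> \<le> e * (\<delta>/2)^2"
      proof -
        have "(2*B) * \<bar>t - x\<bar> \<le> (2*B+1) * \<bar>t - x\<bar>" by (simp add: mult_right_mono)
        also have "\<dots> \<le> (2*B+1) * (e*\<delta>^2/(4*(2*B+1)))" using t dd B by (intro mult_left_mono) auto
        also have "\<dots> = e * (\<delta>/2)^2" using B by (simp add: field_simps power2_eq_square)
        finally show ?thesis .
      qed
      have "x \<le> a \<or> b \<le> x" using g(5) x unfolding a_def b_def by blast
      then show ?thesis
      proof
        assume xa: "x \<le> a"
        have tx': "\<bar>t - x\<bar> = t - x" using xa ab by simp
        have A: "\<bar>\<phi> a - \<phi> x\<bar> \<le> e*(a - x)"
        proof -
          have "\<bar>a - x\<bar> < \<delta>" using xa ab tx by linarith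
          then have "\<bar>\<phi> a - \<phi> x\<bar> \<le> e*\<bar>a - x\<bar>" using \<delta> ab by blast
          then show ?thesis using xa by simp
        qed
        have V: "\<bar>\<phi> b - \<phi> a\<bar> \<le> 2*e*(b - x) \<or> (\<bar>\<phi> b - \<phi> a\<bar> \<le> 2*B \<and> \<delta>/2 > 0 \<and> (b-x) - (a-x) \<ge> \<delta>/2 \<and> (2*B) * (t - x) \<le> e * (\<delta>/2)^2)"
        proof (cases "b - x < \<delta>")
          case True
          have bx: "\<bar>b - x\<bar> = b - x" using xa ab by simp
          then have "\<bar>b - x\<bar> < \<delta>" using True by simp
          then have "\<bar>\<phi> b - \<phi> x\<bar> \<le> e*\<bar>b - x\<bar>" using \<delta>(2) ab(2) by blast
          then have "\<bar>\<phi> b - \<phi> x\<bar> \<le> e*(b - x)" using bx by simp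
          then have "\<bar>\<phi> b - \<phi> a\<bar> \<le> e*(b-x) + e*(a-x)" using A xa ab by simp
          also have "\<dots> \<le> 2*e*(b-x)" using e xa ab by (simp add: algebra_simps mult_left_mono)
          finally show ?thesis by simp
        next
          case False
          then show ?thesis using V2 \<delta> Bt tx' t dd ab by auto
        qed
        have "\<bar>(\<phi> a - \<phi> x) + (\<phi> b - \<phi> a) * sstep (((t-x)-(a-x))/((b-x)-(a-x)))\<bar> \<le> 13*e*(t-x)"
          using xa ab e A V by (intro gap_est[where Bb="2*B" and w="\<delta>/2"]) auto
        then show ?thesis unfolding ev tx' by (simp add: algebra_simps)
      next
        assume xb: "b \<le> x"
        have tx': "\<bar>t - x\<bar> = x - t" using xb ab by simp
        have A: "\<bar>\<phi> b - \<phi> x\<bar> \<le> e*(x - b)"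
        proof -
          have "\<bar>b - x\<bar> < \<delta>" using xb ab tx by linarith
          then have "\<bar>\<phi> b - \<phi> x\<bar> \<le> e*\<bar>b - x\<bar>" using \<delta> ab by blast
          then show ?thesis using xb by simp
        qed
        have V: "\<bar>\<phi> a - \<phi> b\<bar> \<le> 2*e*(x - a) \<or> (\<bar>\<phi> a - \<phi> b\<bar> \<le> 2*B \<and> \<delta>/2 > 0 \<and> (x-a) - (x-b) \<ge> \<delta>/2 \<and> (2*B) * (x - t) \<le> e * (\<delta>/2)^2)"
        proof (cases "x - a < \<delta>")
          case True
          have ax: "\<bar>a - x\<bar> = x - a" using xb ab by simp
          then have "\<bar>a - x\<bar> < \<delta>" using True by simp
          then have "\<bar>\<phi> a - \<phi> x\<bar> \<le> e*\<bar>a - x\<bar>" using \<delta>(2) ab(1) by blast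
          then have "\<bar>\<phi> a - \<phi> x\<bar> \<le> e*(x - a)" using ax by simp
          then have "\<bar>\<phi> a - \<phi> b\<bar> \<le> e*(x-a) + e*(x-b)" using A xb ab by simp
          also have "\<dots> \<le> 2*e*(x-a)" using e xb ab by (simp add: algebra_simps mult_left_mono)
          finally show ?thesis by simp
        next
          case False
          then show ?thesis using V2 \<delta> Bt tx' t dd ab by auto
        qed
        have G: "\<bar>(\<phi> b - \<phi> x) + (\<phi> a - \<phi> b) * sstep (((x-t)-(x-b))/((x-a)-(x-b)))\<bar> \<le> 13*e*(x-t)"
          using xb ab e A V by (intro gap_est[where Bb="2*B" and w="\<delta>/2"]) auto
        have "((x-t)-(x-b))/((x-a)-(x-b)) = 1 - (t - a)/(b - a)" using ab by (simp add: field_simps)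
        then have "sstep (((x-t)-(x-b))/((x-a)-(x-b))) = 1 - sstep ((t - a)/(b - a))" by (simp add: sstep_sym)
        moreover have gen: "\<And>S. \<phi> b - \<phi> x + (\<phi> a - \<phi> b) * (1 - S) = \<phi> a + (\<phi> b - \<phi> a) * S - \<phi> x"
          by (simp add: algebra_simps)
        ultimately have "(\<phi> b - \<phi> x) + (\<phi> a - \<phi> b) * sstep (((x-t)-(x-b))/((x-a)-(x-b))) = extF C \<phi> t - \<phi> x"
          unfolding ev by presburger
        then show ?thesis using G tx' by simp
      qed
    qed
  qed
  show ?thesis using d0 main by blast
qed


lemma extF_deriv_C:
  assumes x: "x \<in> C"
  shows "(extF C \<phi> has_field_derivative 0) (at x)"
proof -
  have "\<forall>e>0. \<exists>d>0. \<forall>y\<in>UNIV. \<bar>y - x\<bar> < d \<longrightarrow> \<bar>extF C \<phi> y - extF C \<phi> x\<bar> \<le> e * \<bar>y - x\<bar>"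
  proof (intro allI impI)
    fix e :: real assume e: "e > 0"
    obtain d where "d > 0" "\<forall>t. \<bar>t - x\<bar> < d \<longrightarrow> \<bar>extF C \<phi> t - \<phi> x\<bar> \<le> 13*(e/13)*\<bar>t - x\<bar>"
      using extF_est[OF x, of "e/13"] e by auto
    then show "\<exists>d>0. \<forall>y\<in>UNIV. \<bar>y - x\<bar> < d \<longrightarrow> \<bar>extF C \<phi> y - extF C \<phi> x\<bar> \<le> e * \<bar>y - x\<bar>"
      using extF_C[OF x] by auto
  qed
  from deriv0_from_est[OF this] show ?thesis by simp
qed

lemma extF_diff: "extF C \<phi> differentiable (at t)"
proof -
  have "\<exists>D. (extF C \<phi> has_real_derivative D) (at t)"
  proof (cases "t \<in> C")
    case True then show ?thesis using extF_deriv_C by blast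
  next
    case nC: False
    consider "t < Inf C" | "Sup C < t" | "Inf C < t" "t < Sup C"
      using nC InfC SupC by (metis linorder_neqE_linordered_idom)
    then show ?thesis
    proof cases
      case 1
      have d: "((\<lambda>s. \<phi> (Inf C) - (Inf C - s)^2) has_real_derivative (2*(Inf C - t))) (at t)"
        by (auto intro!: derivative_eq_intros)
      have "(extF C \<phi> has_real_derivative (2*(Inf C - t))) (at t)"
      proof (rule has_field_derivative_transform_within_open[OF d, of "{..<Inf C}"])
        fix s assume s: "s \<in> {..<Inf C}"
        then have "s \<notin> C" using InfC_le by force
        then show "\<phi> (Inf C) - (Inf C - s)^2 = extF C \<phi> s" using s unfolding extF_def by simp
      qed (use 1 in auto)
      then show ?thesis by blast
    next
      case 2
      have d: "((\<lambda>s. \<phi> (Sup C) + (s - Sup C)^2) has_real_derivative (2*(t - Sup C))) (at t)"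
        by (auto intro!: derivative_eq_intros)
      have "(extF C \<phi> has_real_derivative (2*(t - Sup C))) (at t)"
      proof (rule has_field_derivative_transform_within_open[OF d, of "{Sup C<..}"])
        fix s assume s: "s \<in> {Sup C<..}"
        then have "s \<notin> C" using SupC_ge by force
        moreover have "\<not> s < Inf C" using s InfC SupC_ge[OF InfC] by auto
        ultimately show "\<phi> (Sup C) + (s - Sup C)^2 = extF C \<phi> s" using s unfolding extF_def by simp
      qed (use 2 in auto)
      then show ?thesis by blast
    next
      case 3
      note g = gap[OF nC 3]
      define a where "a = gl C t"
      define b where "b = gr C t"
      have d: "((\<lambda>s. \<phi> a + (\<phi> b - \<phi> a) * sstep ((s - a)/(b - a))) has_real_derivative
          ((\<phi> b - \<phi> a) * ((3*(2*((t - a)/(b - a)) * (1/(b-a)))) - 2*(3*((t - a)/(b - a))^2*(1/(b-a)))))) (at t)"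
        using g unfolding sstep_def a_def b_def by (auto intro!: derivative_eq_intros simp: power2_eq_square)
      have "\<exists>D. (extF C \<phi> has_real_derivative D) (at t)"
      proof (rule exI, rule has_field_derivative_transform_within_open[OF d, of "{a<..<b}"])
        fix s assume s: "s \<in> {a<..<b}"
        note gc = gap_const[OF nC 3, of s]
        show "\<phi> a + (\<phi> b - \<phi> a) * sstep ((s - a)/(b - a)) = extF C \<phi> s"
          using s gc unfolding extF_def a_def b_def by simp
      qed (use g in \<open>auto simp: a_def b_def\<close>)
      then show ?thesis .
    qed
  qed
  then show ?thesis using real_differentiable_def by blast
qed

lemma extF_surj: "surj (extF C \<phi>)"
proof -
  have cont: "continuous_on S (extF C \<phi>)" for S
    using extF_diff by (meson continuous_at_imp_continuous_on differentiable_imp_continuous_within)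
  show ?thesis
  proof (rule surjI[of _ "\<lambda>y. SOME x. extF C \<phi> x = y"], rule someI_ex)
    fix y :: real
    define R where "R = \<bar>y\<bar> + \<bar>\<phi> (Inf C)\<bar> + \<bar>\<phi> (Sup C)\<bar> + 1"
    have R1: "R \<ge> 1" unfolding R_def by simp
    have RR: "R \<le> R^2" using R1 by (simp add: power2_eq_square)
    have l: "extF C \<phi> (Inf C - R) = \<phi> (Inf C) - R^2"
    proof -
      have "Inf C - R \<notin> C" using InfC_le R1 by force
      then show ?thesis using R1 unfolding extF_def by simp
    qed
    have u: "extF C \<phi> (Sup C + R) = \<phi> (Sup C) + R^2"
    proof -
      have "Sup C + R \<notin> C" using SupC_ge R1 by force
      moreover have "\<not> Sup C + R < Inf C" using SupC_ge[OF InfC] R1 by auto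
      ultimately show ?thesis using R1 unfolding extF_def by simp
    qed
    have R2: "R \<ge> \<bar>y\<bar> + \<bar>\<phi> (Inf C)\<bar>" "R \<ge> \<bar>y\<bar> + \<bar>\<phi> (Sup C)\<bar>" unfolding R_def by auto
    have A: "\<phi> (Inf C) \<le> \<bar>\<phi> (Inf C)\<bar>" "- \<phi> (Sup C) \<le> \<bar>\<phi> (Sup C)\<bar>" "y \<le> \<bar>y\<bar>" "- y \<le> \<bar>y\<bar>" by auto
    have "extF C \<phi> (Inf C - R) \<le> y" unfolding l using RR R2 A by linarith
    moreover have "y \<le> extF C \<phi> (Sup C + R)" unfolding u using RR R2 A by linarith
    moreover have "Inf C - R \<le> Sup C + R" using SupC_ge[OF InfC] R1 by auto
    ultimately show "\<exists>x. extF C \<phi> x = y" using IVT'[OF _ _ _ cont] by blast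
  qed
qed

end


lemma finite_choice_pos:
  fixes P :: "nat \<Rightarrow> real \<Rightarrow> bool"
  assumes "\<forall>s<m. \<exists>\<eta>>0. P s \<eta>"
    and mono: "\<And>s \<eta> \<eta>'. P s \<eta> \<Longrightarrow> 0 < \<eta>' \<Longrightarrow> \<eta>' \<le> \<eta> \<Longrightarrow> P s \<eta>'"
  shows "\<exists>\<eta>>0. \<forall>s<m. P s \<eta>"
  using assms(1)
proof (induction m)
  case 0 then show ?case by (intro exI[of _ 1]) auto
next
  case (Suc m)
  then obtain \<eta>1 where h1: "\<eta>1 > 0" "\<forall>s<m. P s \<eta>1" by auto
  obtain \<eta>2 where h2: "\<eta>2 > 0" "P m \<eta>2" using Suc.prems by auto
  show ?case
  proof (intro exI[of _ "min \<eta>1 \<eta>2"] conjI allI impI)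
    show "0 < min \<eta>1 \<eta>2" using h1 h2 by simp
    fix s assume "s < Suc m"
    then consider "s < m" | "s = m" by linarith
    then show "P s (min \<eta>1 \<eta>2)"
    proof cases
      case 1 show ?thesis by (rule mono[of s \<eta>1]) (use h1 h2 1 in auto)
    next
      case 2 show ?thesis by (rule mono[of s \<eta>2]) (use h1 h2 2 in auto)
    qed
  qed
qed

lemma exists_shift_mod:
  fixes x y m :: nat
  assumes "m \<ge> 1"
  shows "\<exists>c. (x + c) mod m = y mod m"
proof -
  obtain m' where m: "m = Suc m'" using assms by (cases m) auto
  have e: "x + (y + m'*x) = y + x*m" unfolding m by (simp add: algebra_simps)
  have "(y + x*m) mod m = y mod m" by simp
  then have "(x + (y + m'*x)) mod m = y mod m" using e by metis
  then show ?thesis by blast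
qed

lemma exists_res_mod:
  fixes a b m :: nat
  assumes "m \<ge> 1"
  shows "\<exists>s<m. b mod m = (a + s) mod m"
proof -
  obtain c where c: "(a + c) mod m = b mod m" using exists_shift_mod[OF assms] by blast
  have "(a + c mod m) mod m = (a + c) mod m" by (simp add: mod_add_right_eq)
  then show ?thesis using c assms by (intro exI[of _ "c mod m"]) auto
qed

definition goodlv :: "('a::metric_space \<Rightarrow> 'a) \<Rightarrow> 'a \<Rightarrow> nat \<Rightarrow> real \<Rightarrow> bool" where
  "goodlv T x0 g \<eta> \<longleftrightarrow> (\<forall>a b. dist ((T^^a) x0) ((T^^b) x0) < \<eta> \<longrightarrow> a mod g = b mod g)"
definition diamlv :: "('a::metric_space \<Rightarrow> 'a) \<Rightarrow> 'a \<Rightarrow> nat \<Rightarrow> real \<Rightarrow> bool" where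
  "diamlv T x0 g \<epsilon> \<longleftrightarrow> (\<forall>a b. a mod g = b mod g \<longrightarrow> dist ((T^^a) x0) ((T^^b) x0) < \<epsilon>)"

context
  fixes X :: "'a::metric_space set" and T :: "'a \<Rightarrow> 'a" and x0 :: 'a
  assumes cX: "compact X" and TX: "T ` X \<subseteq> X" and cT: "continuous_on X T"
    and eqc: "equicontinuous_sys X T" and x0X: "x0 \<in> X"
    and rr: "regularly_recurrent X T x0" and dense: "closure {(T ^^ n) x0 | n::nat. True} = X"
begin

lemma O_in: "(T^^a) x0 \<in> X"
  by (induction a) (use x0X TX in auto)

lemma shift: "\<epsilon> > 0 \<Longrightarrow> \<exists>\<delta>>0. \<forall>a b c. dist ((T^^a) x0) ((T^^b) x0) < \<delta> \<longrightarrow> dist ((T^^(c+a)) x0) ((T^^(c+b)) x0) < \<epsilon>"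
proof -
  assume e: "\<epsilon> > 0"
  then obtain \<delta> where d: "\<delta> > 0" "\<forall>x\<in>X. \<forall>y\<in>X. dist x y < \<delta> \<longrightarrow> (\<forall>n. dist ((T ^^ n) x) ((T ^^ n) y) < \<epsilon>)"
    using eqc unfolding equicontinuous_sys_def by blast
  have "dist ((T^^(c+a)) x0) ((T^^(c+b)) x0) < \<epsilon>" if "dist ((T^^a) x0) ((T^^b) x0) < \<delta>" for a b c
    using d(2) O_in that by (simp add: funpow_add)
  then show ?thesis using d(1) by blast
qed

lemma recur: "\<eta> > 0 \<Longrightarrow> \<exists>m\<ge>1. \<forall>i. dist ((T^^(i*m)) x0) x0 < \<eta>"
proof -
  assume h: "\<eta> > 0"
  have "openin (top_of_set X) (X \<inter> ball x0 \<eta>)" by auto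
  moreover have "x0 \<in> X \<inter> ball x0 \<eta>" using x0X h by auto
  ultimately obtain n where "n \<ge> 1" "\<forall>i. (T ^^ (i * n)) x0 \<in> X \<inter> ball x0 \<eta>"
    using rr unfolding regularly_recurrent_def by blast
  then show ?thesis by (auto simp: dist_commute)
qed

lemma dense_pt: "x \<in> X \<Longrightarrow> e > 0 \<Longrightarrow> \<exists>a. dist ((T^^a) x0) x < e"
proof -
  assume "x \<in> X" "e > 0"
  then have "\<exists>y\<in>{(T ^^ n) x0 | n::nat. True}. dist y x < e"
    using dense closure_approachable[of x "{(T ^^ n) x0 | n::nat. True}"] by simp
  then show ?thesis by blast
qed

lemma lemmaG:
  assumes e: "\<epsilon> > 0"
  shows "\<exists>g \<eta>. g \<ge> 1 \<and> \<eta> > 0 \<and> goodlv T x0 g \<eta> \<and> diamlv T x0 g \<epsilon>"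
proof -
  define Ob where "Ob a = (T^^a) x0" for a
  have "\<exists>\<delta>>0. \<forall>a b c. dist (Ob a) (Ob b) < \<delta> \<longrightarrow> dist (Ob (c+a)) (Ob (c+b)) < \<epsilon>/3"
    unfolding Ob_def using e by (intro shift) simp
  then obtain \<delta>1 where d1: "\<delta>1 > 0" "\<forall>a b c. dist (Ob a) (Ob b) < \<delta>1 \<longrightarrow> dist (Ob (c+a)) (Ob (c+b)) < \<epsilon>/3"
    by blast
  obtain m where m1: "m \<ge> 1" "\<forall>i. dist ((T^^(i*m)) x0) x0 < \<delta>1"
    using recur[OF d1(1)] by blast
  have m: "m \<ge> 1" "\<forall>i. dist (Ob (i*m)) (Ob 0) < \<delta>1" using m1 by (simp_all only: Ob_def funpow_0 simp_thms)
  have A0: "dist (Ob a) (Ob b) < \<epsilon>/3" if "a \<le> b" "a mod m = b mod m" for a b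
  proof -
    have "b mod m = a mod m" using that(2) by simp
    then have "m dvd (b - a)" using mod_eq_dvd_iff_nat[OF that(1), of m] by blast
    then obtain i where i: "b - a = m * i" by (rule dvdE)
    have "dist (Ob (a + i*m)) (Ob (a + 0)) < \<epsilon>/3" using d1(2)[rule_format, OF m(2)[rule_format], where c=a] .
    moreover have "a + i*m = b" using i that by (simp add: algebra_simps)
    ultimately show ?thesis by (metis add_0_right dist_commute)
  qed
  have A: "dist (Ob a) (Ob b) < \<epsilon>/3" if "a mod m = b mod m" for a b
    using A0[of a b] A0[of b a] that by (metis dist_commute nat_le_linear)
  define Rel where "Rel s \<longleftrightarrow> (\<forall>\<eta>>0. \<exists>a b. b mod m = (a + s) mod m \<and> dist (Ob a) (Ob b) < \<eta>)" for s
  have R_add: "Rel (s + s')" if Rs: "Rel s" and Rs': "Rel s'" for s s'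
    unfolding Rel_def
  proof (intro allI impI)
    fix \<eta> :: real assume \<eta>: "\<eta> > 0"
    have "\<exists>\<delta>>0. \<forall>a b c. dist (Ob a) (Ob b) < \<delta> \<longrightarrow> dist (Ob (c+a)) (Ob (c+b)) < \<eta>/2"
      unfolding Ob_def using \<eta> by (intro shift) simp
    then obtain \<delta>2 where d2: "\<delta>2 > 0" "\<forall>a b c. dist (Ob a) (Ob b) < \<delta>2 \<longrightarrow> dist (Ob (c+a)) (Ob (c+b)) < \<eta>/2"
      by blast
    obtain a b where ab: "b mod m = (a + s) mod m" "dist (Ob a) (Ob b) < \<delta>2" using Rs d2(1) unfolding Rel_def by blast
    obtain a' b' where ab': "b' mod m = (a' + s') mod m" "dist (Ob a') (Ob b') < \<delta>2" using Rs' d2(1) unfolding Rel_def by blast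
    have 1: "dist (Ob (a'+a)) (Ob (a'+b)) < \<eta>/2" using d2(2) ab(2) by blast
    have 2: "dist (Ob (b+a')) (Ob (b+b')) < \<eta>/2" using d2(2) ab'(2) by blast
    have "dist (Ob (a'+a)) (Ob (b+b')) < \<eta>" using dist_triangle[of "Ob (a'+a)" "Ob (b+b')" "Ob (a'+b)"] 1 2
      by (simp add: add.commute)
    moreover have "(b + b') mod m = ((a' + a) + (s + s')) mod m"
    proof -
      have "(b + b') mod m = ((a + s) + (a' + s')) mod m" using ab(1) ab'(1) by (rule mod_add_cong)
      then show ?thesis by (simp add: ac_simps)
    qed
    ultimately show "\<exists>a b. b mod m = (a + (s + s')) mod m \<and> dist (Ob a) (Ob b) < \<eta>" by blast
  qed
  have R_m: "Rel m" unfolding Rel_def by (intro allI impI exI[of _ 0]) auto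
  have R_0: "Rel 0" unfolding Rel_def by (intro allI impI exI[of _ 0]) auto
  have R_mult: "Rel (j*u)" if Ru: "Rel u" for j u
  proof (induction j)
    case 0 then show ?case using R_0 by simp
  next
    case (Suc j) then show ?case using R_add[OF Ru Suc.IH] by (simp add: add.commute)
  qed
  have R_mod: "Rel s'" if Rs: "Rel s" and sm: "s mod m = s' mod m" for s s'
    unfolding Rel_def
  proof (intro allI impI)
    fix \<eta> :: real assume "\<eta> > 0"
    then obtain a b where "b mod m = (a + s) mod m" "dist (Ob a) (Ob b) < \<eta>" using Rs unfolding Rel_def by blast
    moreover have "(a + s) mod m = (a + s') mod m" using sm by (metis mod_add_cong)
    ultimately show "\<exists>a b. b mod m = (a + s') mod m \<and> dist (Ob a) (Ob b) < \<eta>" by auto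
  qed
  define g where "g = (LEAST s. 0 < s \<and> Rel s)"
  have gex: "0 < m \<and> Rel m" using m R_m by auto
  have g: "0 < g" "Rel g" using LeastI[of "\<lambda>s. 0 < s \<and> Rel s", OF gex] unfolding g_def by auto
  have gmin: "g \<le> t" if "0 < t" "Rel t" for t unfolding g_def using that by (simp add: Least_le)
  obtain m' where mm: "m = Suc m'" using m by (cases m) auto
  have R_dvd: "g dvd s" if "Rel s" for s
  proof -
    define q where "q = s div g"
    define t where "t = s mod g"
    have s: "s = q*g + t" unfolding q_def t_def by simp
    have "Rel (s + q*m'*g)" using R_add[OF that R_mult[OF g(2), of "q*m'"]] by (simp add: ac_simps)
    moreover have "(s + q*m'*g) mod m = t mod m"
    proof -
      have "s + q*m'*g = t + (q*g)*m" unfolding s mm by (simp add: algebra_simps)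
      then show ?thesis by simp
    qed
    ultimately have "Rel t" using R_mod by blast
    moreover have "t < g" unfolding t_def using g(1) by simp
    ultimately have "t = 0" using gmin by (meson leD neq0_conv)
    then show ?thesis unfolding t_def by auto
  qed
  have gm: "g dvd m" using R_dvd R_m by blast
  have "\<forall>s<m. \<exists>\<eta>>0. (\<not> g dvd s \<longrightarrow> (\<forall>a b. b mod m = (a + s) mod m \<longrightarrow> \<eta> \<le> dist (Ob a) (Ob b)))"
  proof (intro allI impI)
    fix s assume "s < m"
    show "\<exists>\<eta>>0. (\<not> g dvd s \<longrightarrow> (\<forall>a b. b mod m = (a + s) mod m \<longrightarrow> \<eta> \<le> dist (Ob a) (Ob b)))"
    proof (cases "g dvd s")
      case True then show ?thesis by (intro exI[of _ 1]) auto
    next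
      case False
      then have "\<not> Rel s" using R_dvd by blast
      then obtain \<eta> where "\<eta> > 0" "\<forall>a b. b mod m = (a + s) mod m \<longrightarrow> \<not> dist (Ob a) (Ob b) < \<eta>"
        unfolding Rel_def by blast
      then show ?thesis by (intro exI[of _ \<eta>]) (auto simp: not_less)
    qed
  qed
  moreover have "\<And>s \<eta> \<eta>'. (\<not> g dvd s \<longrightarrow> (\<forall>a b. b mod m = (a + s) mod m \<longrightarrow> \<eta> \<le> dist (Ob a) (Ob b))) \<Longrightarrow> 0 < \<eta>' \<Longrightarrow> \<eta>' \<le> \<eta> \<Longrightarrow>
      (\<not> g dvd s \<longrightarrow> (\<forall>a b. b mod m = (a + s) mod m \<longrightarrow> \<eta>' \<le> dist (Ob a) (Ob b)))"
    by (meson order_trans)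
  ultimately obtain \<eta> where \<eta>: "\<eta> > 0" "\<forall>s<m. (\<not> g dvd s \<longrightarrow> (\<forall>a b. b mod m = (a + s) mod m \<longrightarrow> \<eta> \<le> dist (Ob a) (Ob b)))"
    using finite_choice_pos[of m "\<lambda>s \<eta>. (\<not> g dvd s \<longrightarrow> (\<forall>a b. b mod m = (a + s) mod m \<longrightarrow> \<eta> \<le> dist (Ob a) (Ob b)))"]
    by blast
  have good: "goodlv T x0 g \<eta>"
    unfolding goodlv_def Ob_def[symmetric]
  proof (intro allI impI)
    fix a b assume d: "dist (Ob a) (Ob b) < \<eta>"
    obtain s where s: "s < m" "b mod m = (a + s) mod m" using exists_res_mod m by blast
    have "g dvd s"
    proof (rule ccontr)
      assume "\<not> g dvd s"
      then have "\<eta> \<le> dist (Ob a) (Ob b)" using \<eta>(2) s by blast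
      then show False using d by simp
    qed
    have "b mod g = (b mod m) mod g" using gm by (simp add: mod_mod_cancel)
    also have "\<dots> = ((a + s) mod m) mod g" using s(2) by simp
    also have "\<dots> = (a + s) mod g" using gm by (simp add: mod_mod_cancel)
    finally have "b mod g = (a + s) mod g" .
    also have "\<dots> = a mod g" using \<open>g dvd s\<close> by auto
    finally show "a mod g = b mod g" by simp
  qed
  have diam: "diamlv T x0 g \<epsilon>"
    unfolding diamlv_def Ob_def[symmetric]
  proof (intro allI impI)
    fix a b assume ab: "a mod g = b mod g"
    obtain s where s: "s < m" "b mod m = (a + s) mod m" using exists_res_mod m by blast
    have "b mod g = (b mod m) mod g" using gm by (simp add: mod_mod_cancel)
    also have "\<dots> = ((a + s) mod m) mod g" using s(2) by simp
    also have "\<dots> = (a + s) mod g" using gm by (simp add: mod_mod_cancel)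
    finally have "b mod g = (a + s) mod g" .
    then have "a mod g = (a + s) mod g" using ab by simp
    then have "g dvd s" using mod_eq_dvd_iff_nat[of a "a+s" g] by simp
    then obtain i where "s = i * g" by (metis dvd_def mult.commute)
    then have "Rel s" using R_mult[OF g(2)] by simp
    then obtain a' b' where ab': "b' mod m = (a' + s) mod m" "dist (Ob a') (Ob b') < \<delta>1"
      using d1(1) unfolding Rel_def by blast
    obtain c where c: "(a' + c) mod m = a mod m" using exists_shift_mod m by blast
    have 1: "dist (Ob (c+a')) (Ob (c+b')) < \<epsilon>/3" using d1(2) ab'(2) by blast
    have 2: "dist (Ob a) (Ob (c+a')) < \<epsilon>/3" using A c by (simp add: add.commute)
    have "(c + b') mod m = (c + (a' + s)) mod m" using ab'(1) by (metis mod_add_cong)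
    also have "\<dots> = ((a' + c) + s) mod m" by (simp add: ac_simps)
    also have "\<dots> = (a + s) mod m" using c by (metis mod_add_cong)
    also have "\<dots> = b mod m" using s(2) by simp
    finally have 3: "dist (Ob (c+b')) (Ob b) < \<epsilon>/3" using A by blast
    have "dist (Ob a) (Ob b) \<le> dist (Ob a) (Ob (c+a')) + dist (Ob (c+a')) (Ob b)" by (rule dist_triangle)
    also have "dist (Ob (c+a')) (Ob b) \<le> dist (Ob (c+a')) (Ob (c+b')) + dist (Ob (c+b')) (Ob b)" by (rule dist_triangle)
    finally show "dist (Ob a) (Ob b) < \<epsilon>" using 1 2 3 by linarith
  qed
  have "g \<ge> 1" using g(1) by simp
  then show ?thesis using good diam \<eta>(1) by blast
qed


lemma chainG:
  assumes "n0 \<ge> 1" "\<eta>0 > 0" "goodlv T x0 n0 \<eta>0" "\<epsilon> > 0"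
  shows "\<exists>g \<eta>. g \<ge> 1 \<and> \<eta> > 0 \<and> goodlv T x0 g \<eta> \<and> diamlv T x0 g \<epsilon> \<and> n0 dvd g"
proof -
  obtain g \<eta> where g: "g \<ge> 1" "\<eta> > 0" "goodlv T x0 g \<eta>" "diamlv T x0 g (min \<epsilon> \<eta>0)"
    using lemmaG[of "min \<epsilon> \<eta>0"] assms by auto
  have "diamlv T x0 g \<epsilon>" using g(4) unfolding diamlv_def by (meson less_le_trans min.cobounded1)
  moreover have "n0 dvd g"
  proof -
    have "0 mod g = g mod g" by simp
    then have "dist ((T^^0) x0) ((T^^g) x0) < min \<epsilon> \<eta>0" using g(4) unfolding diamlv_def by blast
    then have "dist ((T^^0) x0) ((T^^g) x0) < \<eta>0" by simp
    then have "0 mod n0 = g mod n0" using assms(3) unfolding goodlv_def by blast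
    then show ?thesis by (simp add: mod_eq_0_iff_dvd)
  qed
  ultimately show ?thesis using g by blast
qed

primrec lev :: "nat \<Rightarrow> nat \<times> real" where
  "lev 0 = (1, 1)"
| "lev (Suc k) = (SOME p. fst p \<ge> 1 \<and> snd p > 0 \<and> goodlv T x0 (fst p) (snd p) \<and>
      diamlv T x0 (fst p) (1/(real k+1)) \<and> fst (lev k) dvd fst p)"

lemma lev_props: "fst (lev k) \<ge> 1 \<and> snd (lev k) > 0 \<and> goodlv T x0 (fst (lev k)) (snd (lev k))"
proof (induction k)
  case 0 then show ?case by (simp add: goodlv_def)
next
  case (Suc k)
  have "\<exists>p. fst p \<ge> 1 \<and> snd p > 0 \<and> goodlv T x0 (fst p) (snd p) \<and>
      diamlv T x0 (fst p) (1/(real k+1)) \<and> fst (lev k) dvd fst p"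
    using chainG[of "fst (lev k)" "snd (lev k)" "1/(real k+1)"] Suc by auto
  from someI_ex[OF this] show ?case by simp
qed

lemma lev_suc: "diamlv T x0 (fst (lev (Suc k))) (1/(real k+1)) \<and> fst (lev k) dvd fst (lev (Suc k))"
proof -
  have "\<exists>p. fst p \<ge> 1 \<and> snd p > 0 \<and> goodlv T x0 (fst p) (snd p) \<and>
      diamlv T x0 (fst p) (1/(real k+1)) \<and> fst (lev k) dvd fst p"
    using chainG[of "fst (lev k)" "snd (lev k)" "1/(real k+1)"] lev_props[of k] by auto
  from someI_ex[OF this] show ?thesis by simp
qed

definition adr :: "nat \<Rightarrow> 'a \<Rightarrow> nat" where
  "adr k x = (SOME a. dist ((T^^a) x0) x < snd (lev k) / 2) mod fst (lev k)"

lemma adr_eq: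
  assumes "x \<in> X" "dist ((T^^a) x0) x < snd (lev k) / 2"
  shows "adr k x = a mod fst (lev k)"
proof -
  define a' where "a' = (SOME a. dist ((T^^a) x0) x < snd (lev k) / 2)"
  have a': "dist ((T^^a') x0) x < snd (lev k) / 2" unfolding a'_def using assms(2) by (rule someI)
  have "dist ((T^^a') x0) ((T^^a) x0) \<le> dist ((T^^a') x0) x + dist ((T^^a) x0) x" by (rule dist_triangle2)
  then have "dist ((T^^a') x0) ((T^^a) x0) < snd (lev k)" using a' assms(2) by linarith
  then have "a' mod fst (lev k) = a mod fst (lev k)" using lev_props[of k] unfolding goodlv_def by blast
  then show ?thesis unfolding adr_def a'_def[symmetric] .
qed

lemma adr_exists: "x \<in> X \<Longrightarrow> e > 0 \<Longrightarrow> \<exists>a. dist ((T^^a) x0) x < e \<and> adr k x = a mod fst (lev k)"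
proof -
  assume x: "x \<in> X" and e: "e > 0"
  have "min e (snd (lev k) / 2) > 0" using e lev_props[of k] by simp
  then obtain a where "dist ((T^^a) x0) x < min e (snd (lev k) / 2)" using dense_pt x by blast
  then show ?thesis using adr_eq[OF x] by auto
qed

lemma adr_lt: "adr k x < fst (lev k)"
  unfolding adr_def using lev_props[of k] by simp

lemma adr_loc: "\<exists>e>0. \<forall>x\<in>X. \<forall>y\<in>X. dist x y < e \<longrightarrow> adr k x = adr k y"
proof (intro exI[of _ "snd (lev k) / 4"] conjI ballI impI)
  show "snd (lev k) / 4 > 0" using lev_props[of k] by simp
  fix x y assume x: "x \<in> X" and y: "y \<in> X" and d: "dist x y < snd (lev k) / 4"
  obtain a where a: "dist ((T^^a) x0) x < snd (lev k) / 4" using dense_pt[OF x] \<open>snd (lev k) / 4 > 0\<close> by blast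
  have "dist ((T^^a) x0) y \<le> dist ((T^^a) x0) x + dist x y" by (rule dist_triangle)
  then have ay: "dist ((T^^a) x0) y < snd (lev k) / 2" using a d by linarith
  have ax: "dist ((T^^a) x0) x < snd (lev k) / 2" using a lev_props[of k] by linarith
  show "adr k x = adr k y" using adr_eq[OF x ax] adr_eq[OF y ay] by simp
qed

lemma adr_T:
  assumes x: "x \<in> X"
  shows "adr k (T x) = (adr k x + 1) mod fst (lev k)"
proof -
  have e: "snd (lev k) / 2 > 0" using lev_props[of k] by simp
  obtain d where d: "d > 0" "\<forall>x'\<in>X. dist x' x < d \<longrightarrow> dist (T x') (T x) < snd (lev k) / 2"
    using cT x e unfolding continuous_on_iff by blast
  obtain a where a: "dist ((T^^a) x0) x < min d (snd (lev k) / 2)" "adr k x = a mod fst (lev k)"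
    using adr_exists[OF x, of "min d (snd (lev k) / 2)" k] d e by auto
  have "dist (T ((T^^a) x0)) (T x) < snd (lev k) / 2" using d(2) O_in a(1) by simp
  then have "dist ((T^^(Suc a)) x0) (T x) < snd (lev k) / 2" by simp
  moreover have Tx: "T x \<in> X" using TX x by auto
  ultimately have "adr k (T x) = Suc a mod fst (lev k)" using adr_eq by blast
  then show ?thesis using a(2) by (simp add: mod_Suc_eq)
qed

lemma nn_dvd: "i \<le> j \<Longrightarrow> fst (lev i) dvd fst (lev j)"
proof (induction j)
  case 0 then have "i = 0" by simp
  then show ?case by simp
next
  case (Suc j)
  show ?case
  proof (cases "i = Suc j")
    case True then show ?thesis by simp
  next
    case False
    then have "i \<le> j" using Suc.prems by simp
    then have "fst (lev i) dvd fst (lev j)" using Suc.IH by simp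
    then show ?thesis using lev_suc[of j] dvd_trans by blast
  qed
qed

lemma adr_compat:
  assumes x: "x \<in> X"
  shows "adr k x = adr (Suc k) x mod fst (lev k)"
proof -
  have e: "min (snd (lev k)) (snd (lev (Suc k))) / 2 > 0" using lev_props[of k] lev_props[of "Suc k"] by simp
  obtain a where a: "dist ((T^^a) x0) x < min (snd (lev k)) (snd (lev (Suc k))) / 2" using dense_pt[OF x e] by blast
  have 1: "adr k x = a mod fst (lev k)" using a by (intro adr_eq[OF x]) auto
  have 2: "adr (Suc k) x = a mod fst (lev (Suc k))" using a by (intro adr_eq[OF x]) auto
  show ?thesis unfolding 1 2 using lev_suc[of k] by (simp add: mod_mod_cancel)
qed

lemma adr_sep:
  assumes x: "x \<in> X" and y: "y \<in> X" and xy: "x \<noteq> y"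
  shows "\<exists>k. adr k x \<noteq> adr k y"
proof (rule ccontr)
  assume H: "\<not> (\<exists>k. adr k x \<noteq> adr k y)"
  define \<epsilon> where "\<epsilon> = dist x y / 3"
  have e: "\<epsilon> > 0" unfolding \<epsilon>_def using xy by simp
  obtain n :: nat where n: "n > 0" "inverse (real n) < \<epsilon>" using ex_inverse_of_nat_less[OF e] by blast
  obtain k where k: "n = Suc k" using n(1) by (cases n) auto
  have kk: "1/(real k+1) < \<epsilon>" using n(2) k by (simp add: inverse_eq_divide add.commute)
  obtain a where a: "dist ((T^^a) x0) x < \<epsilon>" "adr (Suc k) x = a mod fst (lev (Suc k))"
    using adr_exists[OF x e] by blast
  obtain b where b: "dist ((T^^b) x0) y < \<epsilon>" "adr (Suc k) y = b mod fst (lev (Suc k))"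
    using adr_exists[OF y e] by blast
  have "a mod fst (lev (Suc k)) = b mod fst (lev (Suc k))" using a(2) b(2) H by auto
  then have "dist ((T^^a) x0) ((T^^b) x0) < 1/(real k+1)" using lev_suc[of k] unfolding diamlv_def by blast
  moreover have "dist x y \<le> dist ((T^^a) x0) x + dist ((T^^a) x0) ((T^^b) x0) + dist ((T^^b) x0) y"
  proof -
    have t1: "dist x y \<le> dist x ((T^^a) x0) + dist ((T^^a) x0) y" by (rule dist_triangle)
    have t2: "dist ((T^^a) x0) y \<le> dist ((T^^a) x0) ((T^^b) x0) + dist ((T^^b) x0) y" by (rule dist_triangle)
    have t3: "dist x ((T^^a) x0) = dist ((T^^a) x0) x" by (rule dist_commute)
    show ?thesis using t1 t2 t3 by linarith
  qed
  ultimately have "dist x y < 3 * \<epsilon>" using a(1) b(1) kk by linarith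
  then show False unfolding \<epsilon>_def by simp
qed

lemma T_onto: "T ` X = X"
proof
  show "T ` X \<subseteq> X" using TX .
  have cl: "closed (T ` X)" using compact_continuous_image[OF cT cX] by (rule compact_imp_closed)
  have x0T: "x0 \<in> T ` X"
  proof -
    have "x0 \<in> closure (T ` X)"
      unfolding closure_approachable
    proof (intro allI impI)
      fix e :: real assume "e > 0"
      then obtain m where m: "m \<ge> 1" "\<forall>i. dist ((T^^(i*m)) x0) x0 < e" using recur by blast
      obtain m' where "m = Suc m'" using m(1) by (cases m) auto
      then have "(T^^(1*m)) x0 = T ((T^^m') x0)" by simp
      then have "(T^^(1*m)) x0 \<in> T ` X" using O_in by simp
      then show "\<exists>y\<in>T ` X. dist y x0 < e" using m(2) by blast
    qed
    then show ?thesis using cl by simp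
  qed
  have "{(T ^^ n) x0 | n::nat. True} \<subseteq> T ` X"
  proof
    fix z assume "z \<in> {(T ^^ n) x0 | n::nat. True}"
    then obtain n where z: "z = (T^^n) x0" by blast
    show "z \<in> T ` X"
    proof (cases n)
      case 0 then show ?thesis using z x0T by simp
    next
      case (Suc n') then show ?thesis using z O_in by simp
    qed
  qed
  then have "closure {(T ^^ n) x0 | n::nat. True} \<subseteq> T ` X" using cl by (rule closure_minimal)
  then show "X \<subseteq> T ` X" using dense by simp
qed

end

lemma odometer_addresses:
  fixes X :: "'a::metric_space set" and T :: "'a \<Rightarrow> 'a"
  assumes "odometer X T"
  shows "\<exists>(n::nat\<Rightarrow>nat) (r::nat\<Rightarrow>'a\<Rightarrow>nat). n 0 = 1 \<and> (\<forall>k. 1 \<le> n k \<and> n k dvd n (Suc k)) \<and>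
     (\<forall>k. \<forall>x\<in>X. r k x < n k \<and> r k x = r (Suc k) x mod n k \<and> r k (T x) = (r k x + 1) mod n k) \<and>
     (\<forall>k. \<exists>e>0. \<forall>x\<in>X. \<forall>y\<in>X. dist x y < e \<longrightarrow> r k x = r k y) \<and>
     (\<forall>x\<in>X. \<forall>y\<in>X. x \<noteq> y \<longrightarrow> (\<exists>k. r k x \<noteq> r k y)) \<and> T ` X = X"
proof -
  obtain x0 where x0: "x0 \<in> X" "regularly_recurrent X T x0" "closure {(T ^^ n) x0 | n::nat. True} = X"
    using assms unfolding odometer_def by blast
  have ds: "compact X" "T ` X \<subseteq> X" "continuous_on X T" using assms unfolding odometer_def dynamical_system_def by auto
  have eq: "equicontinuous_sys X T" using assms unfolding odometer_def by auto
  note H = ds eq x0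
  define n where "n = (\<lambda>k. fst (lev T x0 k))"
  define r where "r = adr T x0"
  have 1: "n 0 = 1" unfolding n_def using lev.simps(1)[OF H] by simp
  have 2: "\<forall>k. 1 \<le> n k \<and> n k dvd n (Suc k)" unfolding n_def using lev_props[OF H] lev_suc[OF H] by blast
  have 3: "\<forall>k. \<forall>x\<in>X. r k x < n k \<and> r k x = r (Suc k) x mod n k \<and> r k (T x) = (r k x + 1) mod n k"
    unfolding n_def r_def using adr_lt[OF H] adr_compat[OF H] adr_T[OF H] by blast
  have 4: "\<forall>k. \<exists>e>0. \<forall>x\<in>X. \<forall>y\<in>X. dist x y < e \<longrightarrow> r k x = r k y"
    unfolding r_def using adr_loc[OF H] by blast
  have 5: "\<forall>x\<in>X. \<forall>y\<in>X. x \<noteq> y \<longrightarrow> (\<exists>k. r k x \<noteq> r k y)"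
    unfolding r_def using adr_sep[OF H] by blast
  have 6: "T ` X = X" using T_onto[OF H] .
  show ?thesis using 1 2 3 4 5 6 by blast
qed



definition qq :: "(nat \<Rightarrow> nat) \<Rightarrow> nat \<Rightarrow> nat" where "qq n k = n (Suc k) div n k"
definition rt :: "(nat \<Rightarrow> nat) \<Rightarrow> nat \<Rightarrow> real" where "rt n k = 1 / (real (Suc k) * real (qq n k))"
definition bb :: "(nat \<Rightarrow> nat) \<Rightarrow> nat \<Rightarrow> nat" where "bb n k = Max (insert 0 (n ` {j. j < k \<and> n j < n k}))"
definition expo :: "(nat \<Rightarrow> nat) \<Rightarrow> nat \<Rightarrow> nat \<Rightarrow> nat" where "expo n k \<rho> = (\<rho> + (n k - 1 - bb n k)) mod n k"
primrec cc :: "(nat \<Rightarrow> nat) \<Rightarrow> nat \<Rightarrow> real" where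
  "cc n 0 = 1"
| "cc n (Suc k) = cc n k * rt n k ^ (n k - 1) / (8 * real (qq n (Suc k)) * 4 ^ Suc k)"
declare cc.simps(2)[simp del]
definition lam :: "(nat \<Rightarrow> nat) \<Rightarrow> nat \<Rightarrow> real" where "lam n k = cc n k * rt n k ^ (n k - 1)"
definition LL :: "(nat \<Rightarrow> nat) \<Rightarrow> nat \<Rightarrow> nat \<Rightarrow> real" where "LL n k \<rho> = cc n k * rt n k ^ expo n k \<rho>"
definition aa :: "(nat \<Rightarrow> nat) \<Rightarrow> (nat \<Rightarrow> 'a \<Rightarrow> nat) \<Rightarrow> nat \<Rightarrow> 'a \<Rightarrow> real" where
  "aa n r k x = LL n k (r k x) * real (r (Suc k) x div n k)"
definition MM :: "(nat \<Rightarrow> nat) \<Rightarrow> nat \<Rightarrow> real" where "MM n k = (real (qq n k) - 1) * cc n k"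
definition tau :: "(nat \<Rightarrow> nat) \<Rightarrow> nat \<Rightarrow> real" where "tau n k = lam n k / (8 * 4^k)"
definition pp :: "(nat \<Rightarrow> nat) \<Rightarrow> (nat \<Rightarrow> 'a \<Rightarrow> nat) \<Rightarrow> 'a \<Rightarrow> real" where "pp n r x = (\<Sum>k. aa n r k x)"

lemma pow4: "(4::real) \<le> 8 * 4 ^ Suc k"
proof -
  have h: "(1::real) \<le> 4 ^ k" by (rule one_le_power) simp
  show ?thesis unfolding power_Suc using h by linarith
qed

context
  fixes X :: "'a::metric_space set" and T :: "'a \<Rightarrow> 'a" and n :: "nat \<Rightarrow> nat" and r :: "nat \<Rightarrow> 'a \<Rightarrow> nat"
  assumes n0: "n 0 = 1" and npos: "\<And>k. 1 \<le> n k" and ndvd: "\<And>k. n k dvd n (Suc k)"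
   and rlt: "\<And>k x. x \<in> X \<Longrightarrow> r k x < n k" and rcomp: "\<And>k x. x\<in>X \<Longrightarrow> r k x = r (Suc k) x mod n k"
   and rT: "\<And>k x. x\<in>X \<Longrightarrow> r k (T x) = (r k x + 1) mod n k"
   and rloc: "\<And>k. \<exists>e>0. \<forall>x\<in>X. \<forall>y\<in>X. dist x y < e \<longrightarrow> r k x = r k y"
   and rsep: "\<And>x y. x\<in>X \<Longrightarrow> y\<in>X \<Longrightarrow> x \<noteq> y \<Longrightarrow> \<exists>k. r k x \<noteq> r k y"
   and TX: "\<And>x. x\<in>X \<Longrightarrow> T x \<in> X"
begin

lemma q_props: "n (Suc k) = qq n k * n k" "qq n k \<ge> 1"
proof -
  obtain d where d: "n (Suc k) = n k * d" using ndvd by (rule dvdE)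
  have nk: "n k > 0" using npos[of k] by simp
  have q: "qq n k = d" unfolding qq_def d using nk by simp
  show "n (Suc k) = qq n k * n k" using d q by simp
  have "d \<noteq> 0" using d npos[of "Suc k"] by auto
  then show "qq n k \<ge> 1" using q by simp
qed

lemma rt_props: "0 < rt n k" "rt n k \<le> 1"
proof -
  have q: "real (qq n k) \<ge> 1" using q_props(2)[of k] by simp
  have "real (Suc k) * real (qq n k) \<ge> 1 * 1" using q by (intro mult_mono) auto
  then show "0 < rt n k" "rt n k \<le> 1" unfolding rt_def by auto
qed

lemma cc_pos: "0 < cc n k"
proof (induction k)
  case 0 then show ?case by simp
next
  case (Suc k)
  have "real (qq n (Suc k)) \<ge> 1" using q_props(2)[of "Suc k"] by simp
  then show ?case using Suc rt_props[of k] by (simp add: cc.simps(2))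
qed

lemma lam_props: "0 < lam n k" "lam n k \<le> cc n k"
proof -
  have "rt n k ^ (n k - 1) \<le> 1" using rt_props[of k] by (simp add: power_le_one)
  then show "lam n k \<le> cc n k" unfolding lam_def using cc_pos[of k] by (simp add: mult_left_le)
  show "0 < lam n k" unfolding lam_def using cc_pos[of k] rt_props[of k] by simp
qed

lemma cc_suc: "cc n (Suc k) * real (qq n (Suc k)) = lam n k / (8 * 4 ^ Suc k)"
proof -
  have "real (qq n (Suc k)) \<ge> 1" using q_props(2)[of "Suc k"] by simp
  then show ?thesis unfolding lam_def by (simp add: field_simps cc.simps(2))
qed

lemma cc_suc_le: "cc n (Suc k) \<le> lam n k / (8 * 4 ^ Suc k)"
proof -
  have "real (qq n (Suc k)) \<ge> 1" using q_props(2)[of "Suc k"] by simp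
  then have "cc n (Suc k) * 1 \<le> cc n (Suc k) * real (qq n (Suc k))" using cc_pos[of "Suc k"] by (intro mult_left_mono) auto
  then show ?thesis using cc_suc by simp
qed

lemma MM_props: "0 \<le> MM n k" "MM n (Suc k) \<le> lam n k / (8 * 4 ^ Suc k)"
proof -
  show "0 \<le> MM n k" unfolding MM_def using q_props(2)[of k] cc_pos[of k] by simp
  have "MM n (Suc k) \<le> real (qq n (Suc k)) * cc n (Suc k)" unfolding MM_def
    by (rule mult_right_mono) (use cc_pos[of "Suc k"] in auto)
  then show "MM n (Suc k) \<le> lam n k / (8 * 4 ^ Suc k)" using cc_suc by (simp add: mult.commute)
qed

lemma lam_suc: "lam n (Suc k) \<le> lam n k"
proof -
  have "lam n (Suc k) \<le> cc n (Suc k)" by (rule lam_props(2))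
  also have "\<dots> \<le> lam n k / (8 * 4 ^ Suc k)" by (rule cc_suc_le)
  also have "\<dots> \<le> lam n k" using lam_props(1)[of k] pow4[of k] by (simp add: divide_le_eq)
  finally show ?thesis .
qed

lemma lam_anti: "i \<le> j \<Longrightarrow> lam n j \<le> lam n i"
proof (induction j)
  case 0 then show ?case by simp
next
  case (Suc j)
  show ?case
  proof (cases "i = Suc j")
    case True then show ?thesis by simp
  next
    case False then have "i \<le> j" using Suc.prems by simp
    then show ?thesis using Suc.IH lam_suc[of j] by linarith
  qed
qed

lemma cc_geo: "cc n k \<le> (1/4)^k"
proof (induction k)
  case 0 then show ?case by simp
next
  case (Suc k)
  have "cc n (Suc k) \<le> lam n k / (8 * 4 ^ Suc k)" by (rule cc_suc_le)
  also have "\<dots> \<le> lam n k / 4" using lam_props(1)[of k] pow4[of k] by (intro divide_left_mono) auto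
  also have "\<dots> \<le> cc n k / 4" using lam_props(2)[of k] by simp
  also have "\<dots> \<le> (1/4)^k / 4" using Suc by simp
  finally show ?case by simp
qed

lemma MM_geo: "MM n k \<le> (real (qq n 0) + 1) * (1/4)^k"
proof (cases k)
  case 0 then show ?thesis unfolding MM_def by simp
next
  case (Suc k')
  have "MM n (Suc k') \<le> lam n k' / (8 * 4 ^ Suc k')" by (rule MM_props(2))
  also have "\<dots> \<le> lam n k' / 4" using lam_props(1)[of k'] pow4[of k'] by (intro divide_left_mono) auto
  also have "\<dots> \<le> (1/4)^k' / 4" using lam_props(2)[of k'] cc_geo[of k'] by simp
  also have "\<dots> = 1 * (1/4)^(Suc k')" by simp
  also have "\<dots> \<le> (real (qq n 0) + 1) * (1/4)^(Suc k')" by (intro mult_right_mono) auto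
  finally show ?thesis using Suc by simp
qed

lemma expo_lt: "expo n k \<rho> < n k"
  unfolding expo_def using npos[of k] by simp

lemma LL_props: "lam n k \<le> LL n k \<rho>" "LL n k \<rho> \<le> cc n k"
proof -
  have e: "expo n k \<rho> \<le> n k - 1" using expo_lt[of k \<rho>] by simp
  show "lam n k \<le> LL n k \<rho>" unfolding lam_def LL_def using cc_pos[of k] rt_props[of k]
    by (intro mult_left_mono power_decreasing e) auto
  have "rt n k ^ expo n k \<rho> \<le> 1" using rt_props[of k] by (simp add: power_le_one)
  then show "LL n k \<rho> \<le> cc n k" unfolding LL_def using cc_pos[of k] by (simp add: mult_left_le)
qed

lemma div_bound: "x \<in> X \<Longrightarrow> r (Suc k) x div n k < qq n k"
proof -
  assume x: "x \<in> X"
  have "r (Suc k) x < qq n k * n k" using rlt[OF x, of "Suc k"] q_props(1)[of k] by simp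
  then show ?thesis using npos[of k] by (simp add: div_less_iff_less_mult)
qed

lemma aa_props: "x \<in> X \<Longrightarrow> 0 \<le> aa n r k x \<and> aa n r k x \<le> MM n k"
proof -
  assume x: "x \<in> X"
  have d: "real (r (Suc k) x div n k) \<le> real (qq n k) - 1" using div_bound[OF x, of k] by linarith
  have L: "0 \<le> LL n k (r k x)" "LL n k (r k x) \<le> cc n k" using LL_props[of k "r k x"] lam_props[of k] by auto
  have "aa n r k x \<le> cc n k * (real (qq n k) - 1)" unfolding aa_def using L d by (intro mult_mono) auto
  then show ?thesis unfolding aa_def MM_def using L by (simp add: mult.commute)
qed

lemma aa_summable: "x \<in> X \<Longrightarrow> summable (\<lambda>k. aa n r k x)"
proof -
  assume x: "x \<in> X"
  have g: "summable (\<lambda>k. (real (qq n 0) + 1) * (1/4)^k)" by (intro summable_mult summable_geometric) simp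
  show ?thesis
  proof (rule summable_comparison_test[OF _ g], intro exI allI impI)
    fix k :: nat assume "k \<ge> 0"
    show "norm (aa n r k x) \<le> (real (qq n 0) + 1) * (1/4)^k" using aa_props[OF x, of k] MM_geo[of k] by simp
  qed
qed

lemma split_est:
  assumes x: "x \<in> X" and y: "y \<in> X" and eq: "\<forall>j<k. aa n r j x = aa n r j y"
  shows "\<bar>(pp n r x - pp n r y) - (aa n r k x - aa n r k y)\<bar> \<le> tau n k"
proof -
  define d where "d j = aa n r j x - aa n r j y" for j
  have sd: "summable d" unfolding d_def using aa_summable[OF x] aa_summable[OF y] by (rule summable_diff)
  have pd: "pp n r x - pp n r y = suminf d" unfolding pp_def d_def using aa_summable[OF x] aa_summable[OF y] by (rule suminf_diff)
  have "suminf d = (\<Sum>i. d (i + Suc k)) + (\<Sum>j<Suc k. d j)" using sd by (rule suminf_split_initial_segment)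
  moreover have "(\<Sum>j<Suc k. d j) = d k" using eq unfolding d_def by simp
  ultimately have e1: "(pp n r x - pp n r y) - (aa n r k x - aa n r k y) = (\<Sum>i. d (i + Suc k))" using pd unfolding d_def by simp
  define G where "G i = lam n k / (8 * 4 ^ Suc k) * (1/4)^i" for i
  have sG: "summable G" unfolding G_def by (intro summable_mult summable_geometric) simp
  have bnd: "norm (d (i + Suc k)) \<le> G i" for i
  proof -
    have "\<bar>d (i + Suc k)\<bar> \<le> MM n (i + Suc k)" unfolding d_def using aa_props[OF x, of "i + Suc k"] aa_props[OF y, of "i + Suc k"] by linarith
    also have "\<dots> = MM n (Suc (i + k))" by simp
    also have "\<dots> \<le> lam n (i + k) / (8 * 4 ^ Suc (i + k))" by (rule MM_props(2))
    also have "\<dots> \<le> lam n k / (8 * 4 ^ Suc (i + k))" using lam_anti[of k "i + k"] by (intro divide_right_mono) auto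
    also have "\<dots> = G i" unfolding G_def by (simp add: power_add field_simps)
    finally show ?thesis by simp
  qed
  have "\<bar>\<Sum>i. d (i + Suc k)\<bar> \<le> suminf G" using norm_suminf_le[of "\<lambda>i. d (i + Suc k)" G] bnd sG by simp
  also have "suminf G = lam n k / (8 * 4 ^ Suc k) * (4/3)"
    unfolding G_def by (subst suminf_mult) (simp_all add: suminf_geometric)
  also have "\<dots> \<le> tau n k" unfolding tau_def using lam_props(1)[of k] by (simp add: field_simps)
  finally show ?thesis using e1 by simp
qed


lemma n_dvd_le: "i \<le> j \<Longrightarrow> n i dvd n j"
proof (induction j)
  case 0 then show ?case by simp
next
  case (Suc j)
  show ?case
  proof (cases "i = Suc j")
    case True then show ?thesis by simp
  next
    case False then have "i \<le> j" using Suc.prems by simp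
    then show ?thesis using Suc.IH ndvd[of j] dvd_trans by blast
  qed
qed

lemma n_mono: "i \<le> j \<Longrightarrow> n i \<le> n j"
  using n_dvd_le npos[of j] by (simp add: dvd_imp_le)

lemma r_down: "x \<in> X \<Longrightarrow> i \<le> j \<Longrightarrow> r i x = r j x mod n i"
proof (induction j)
  case 0 then have "i = 0" by simp
  then show ?case using rlt[OF 0(1), of 0] by simp
next
  case (Suc j)
  show ?case
  proof (cases "i = Suc j")
    case True then show ?thesis using rlt[OF Suc.prems(1), of "Suc j"] by simp
  next
    case False then have ij: "i \<le> j" using Suc.prems by simp
    have "r i x = r j x mod n i" using Suc.IH ij Suc.prems(1) by simp
    also have "\<dots> = (r (Suc j) x mod n j) mod n i" using rcomp[OF Suc.prems(1), of j] by simp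
    also have "\<dots> = r (Suc j) x mod n i" using n_dvd_le[OF ij] by (simp add: mod_mod_cancel)
    finally show ?thesis .
  qed
qed

lemma r0: "x \<in> X \<Longrightarrow> r 0 x = 0" using rlt[of x 0] n0 by simp

lemma aa_eq: "x \<in> X \<Longrightarrow> y \<in> X \<Longrightarrow> r k x = r k y \<Longrightarrow> \<forall>j<k. aa n r j x = aa n r j y"
proof (intro allI impI)
  fix j assume x: "x \<in> X" and y: "y \<in> X" and e: "r k x = r k y" and j: "j < k"
  have "r j x = r j y" using r_down[OF x, of j k] r_down[OF y, of j k] j e by simp
  moreover have "r (Suc j) x = r (Suc j) y" using r_down[OF x, of "Suc j" k] r_down[OF y, of "Suc j" k] j e by simp
  ultimately show "aa n r j x = aa n r j y" unfolding aa_def by simp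
qed

lemma r_suc_split: "x \<in> X \<Longrightarrow> r (Suc k) x = (r (Suc k) x div n k) * n k + r k x"
  using rcomp[of x k] by simp

lemma LB:
  assumes x: "x \<in> X" and y: "y \<in> X" and e: "r k x = r k y" and ne: "r (Suc k) x \<noteq> r (Suc k) y"
  shows "(7/8) * LL n k (r k x) \<le> \<bar>pp n r x - pp n r y\<bar>"
proof -
  define jx where "jx = r (Suc k) x div n k"
  define jy where "jy = r (Suc k) y div n k"
  have "jx \<noteq> jy" using r_suc_split[OF x, of k] r_suc_split[OF y, of k] e ne unfolding jx_def jy_def by auto
  then have j1: "1 \<le> \<bar>real jx - real jy\<bar>" by linarith
  have L0: "0 \<le> LL n k (r k x)" using LL_props[of k "r k x"] lam_props[of k] by linarith
  have "aa n r k x - aa n r k y = LL n k (r k x) * (real jx - real jy)"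
    unfolding aa_def jx_def jy_def e by (simp add: algebra_simps)
  then have A: "LL n k (r k x) \<le> \<bar>aa n r k x - aa n r k y\<bar>"
    using j1 L0 by (simp add: abs_mult mult_le_cancel_left1)
  have S: "\<bar>(pp n r x - pp n r y) - (aa n r k x - aa n r k y)\<bar> \<le> tau n k"
    using split_est[OF x y aa_eq[OF x y e]] .
  have "tau n k \<le> lam n k / 8"
  proof -
    have "(1::real) \<le> 4^k" by (rule one_le_power) simp
    then have "(8::real) \<le> 8 * 4^k" by simp
    then show ?thesis unfolding tau_def using lam_props(1)[of k] by (intro divide_left_mono) auto
  qed
  also have "\<dots> \<le> LL n k (r k x) / 8" using LL_props(1)[of k "r k x"] by simp
  finally show ?thesis using A S by linarith
qed

lemma UB:
  assumes x: "x \<in> X" and y: "y \<in> X" and e: "r k x = r k y"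
  shows "\<bar>pp n r x - pp n r y\<bar> \<le> (real (qq n k) - 1) * LL n k (r k x) + tau n k"
proof -
  define jx where "jx = r (Suc k) x div n k"
  define jy where "jy = r (Suc k) y div n k"
  have "jx < qq n k" "jy < qq n k" using div_bound[OF x] div_bound[OF y] unfolding jx_def jy_def by auto
  then have j1: "\<bar>real jx - real jy\<bar> \<le> real (qq n k) - 1" by linarith
  have L0: "0 \<le> LL n k (r k x)" using LL_props[of k "r k x"] lam_props[of k] by linarith
  have "aa n r k x - aa n r k y = LL n k (r k x) * (real jx - real jy)"
    unfolding aa_def jx_def jy_def e by (simp add: algebra_simps)
  moreover have "\<bar>real jx - real jy\<bar> * LL n k (r k x) \<le> (real (qq n k) - 1) * LL n k (r k x)"
    by (rule mult_right_mono[OF j1 L0])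
  ultimately have A: "\<bar>aa n r k x - aa n r k y\<bar> \<le> (real (qq n k) - 1) * LL n k (r k x)"
    using L0 by (simp add: abs_mult mult.commute)
  have S: "\<bar>(pp n r x - pp n r y) - (aa n r k x - aa n r k y)\<bar> \<le> tau n k"
    using split_est[OF x y aa_eq[OF x y e]] .
  show ?thesis using A S by linarith
qed

lemma bb_lt: "bb n k < n k"
proof -
  have fin: "finite (insert 0 (n ` {j. j < k \<and> n j < n k}))" by simp
  have "\<forall>a\<in>insert 0 (n ` {j. j < k \<and> n j < n k}). a < n k" using npos[of k] by auto
  then show ?thesis unfolding bb_def using fin by (simp add: Max_less_iff)
qed

lemma expo_succ_nat:
  fixes \<rho> \<beta> N :: nat
  assumes "\<rho> < N" "\<beta> < N" "\<rho> \<noteq> \<beta>"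
  shows "((\<rho>+1) mod N + (N - 1 - \<beta>)) mod N = (\<rho> + (N - 1 - \<beta>)) mod N + 1"
proof (cases "\<rho> < \<beta>")
  case True
  have "(\<rho>+1) mod N = \<rho> + 1" using assms True by simp
  moreover have "(\<rho> + (N - 1 - \<beta>)) mod N = \<rho> + (N - 1 - \<beta>)" using assms True by simp
  moreover have "(\<rho> + 1 + (N - 1 - \<beta>)) mod N = \<rho> + 1 + (N - 1 - \<beta>)" using assms True by simp
  ultimately show ?thesis by simp
next
  case False
  then have gt: "\<beta> < \<rho>" using assms(3) by simp
  have e1: "(\<rho> + (N - 1 - \<beta>)) mod N = \<rho> - \<beta> - 1"
  proof -
    have "\<rho> + (N - 1 - \<beta>) = (\<rho> - \<beta> - 1) + N" using assms gt by simp
    moreover have "\<rho> - \<beta> - 1 < N" using assms by simp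
    ultimately show ?thesis by simp
  qed
  show ?thesis
  proof (cases "\<rho> + 1 < N")
    case True
    have A: "(\<rho>+1) mod N + (N - 1 - \<beta>) = (\<rho> - \<beta>) + N" using True assms gt by simp
    have "((\<rho>+1) mod N + (N - 1 - \<beta>)) mod N = (\<rho> - \<beta>) mod N" unfolding A by simp
    also have "\<dots> = \<rho> - \<beta>" using assms by simp
    also have "\<dots> = (\<rho> - \<beta> - 1) + 1" using gt by simp
    finally show ?thesis using e1 by simp
  next
    case False
    then have "\<rho> + 1 = N" using assms by simp
    then have "(\<rho>+1) mod N = 0" by simp
    moreover have "N - 1 - \<beta> < N" using assms by simp
    ultimately show ?thesis using e1 gt \<open>\<rho> + 1 = N\<close> by simp
  qed
qed

lemma LL_succ:
  assumes "\<rho> < n k" "\<rho> \<noteq> bb n k"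
  shows "LL n k ((\<rho>+1) mod n k) = rt n k * LL n k \<rho>"
proof -
  have "expo n k ((\<rho>+1) mod n k) = expo n k \<rho> + 1"
    unfolding expo_def using expo_succ_nat[OF assms(1) bb_lt assms(2)] .
  then show ?thesis unfolding LL_def by (simp add: algebra_simps)
qed

lemma pair_bad:
  assumes x: "x \<in> X" and k12: "k1 < k2" and g1: "n k1 < n (Suc k1)"
    and b1: "r k1 x = bb n k1" and b2: "r k2 x = bb n k2"
  shows "n k1 = 1"
proof (rule ccontr)
  assume nk1: "n k1 \<noteq> 1"
  define S2 where "S2 = insert 0 (n ` {j. j < k2 \<and> n j < n k2})"
  have fin2: "finite S2" unfolding S2_def by simp
  have "n k1 < n k2" using g1 n_mono[of "Suc k1" k2] k12 by simp
  then have "n k1 \<in> S2" unfolding S2_def using k12 by auto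
  then have ge: "n k1 \<le> bb n k2" unfolding bb_def S2_def[symmetric] using fin2 by simp
  have "S2 \<noteq> {}" unfolding S2_def by simp
  then have "bb n k2 \<in> S2" unfolding bb_def S2_def[symmetric] using fin2 by (intro Max_in) auto
  moreover have "bb n k2 \<noteq> 0" using ge npos[of k1] by simp
  ultimately obtain j where j: "j < k2" "bb n k2 = n j" unfolding S2_def by auto
  have dv: "n k1 dvd n j"
  proof (cases "k1 \<le> j")
    case True then show ?thesis by (rule n_dvd_le)
  next
    case False
    then have "n j dvd n k1" by (intro n_dvd_le) simp
    moreover have "n j \<le> n k1" using False n_mono by simp
    ultimately have "n j = n k1" using ge j(2) by simp
    then show ?thesis by simp
  qed
  have "r k1 x = r k2 x mod n k1" using r_down[OF x] k12 by simp
  also have "\<dots> = 0" using b2 j(2) dv by simp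
  finally have "bb n k1 = 0" using b1 by simp
  moreover have "k1 \<noteq> 0" using nk1 n0 by (metis)
  moreover have "1 < n k1" using nk1 npos[of k1] by simp
  ultimately have "0 \<in> {j. j < k1 \<and> n j < n k1}" using n0 by auto
  then have "n 0 \<in> insert 0 (n ` {j. j < k1 \<and> n j < n k1})" by blast
  then have "n 0 \<le> bb n k1" unfolding bb_def by simp
  then show False using \<open>bb n k1 = 0\<close> n0 by simp
qed

lemma bad_finite:
  assumes x: "x \<in> X"
  shows "\<exists>K. \<forall>k\<ge>K. n k < n (Suc k) \<longrightarrow> r k x \<noteq> bb n k"
proof -
  define S where "S = {k. n k < n (Suc k) \<and> r k x = bb n k}"
  have "finite S"
  proof (rule ccontr)
    assume "infinite S"
    then have ub: "\<forall>m. \<exists>k>m. k \<in> S" by (simp add: infinite_nat_iff_unbounded)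
    obtain k1 where k1: "k1 \<in> S" using ub by blast
    obtain k2 where k2: "k2 > k1" "k2 \<in> S" using ub by blast
    obtain k3 where k3: "k3 > k2" "k3 \<in> S" using ub by blast
    have "n k1 = 1" using pair_bad[OF x k2(1)] k1 k2 unfolding S_def by auto
    moreover have "n k2 = 1" using pair_bad[OF x k3(1)] k2 k3 unfolding S_def by auto
    moreover have "n (Suc k1) \<le> n k2" using k2(1) n_mono by simp
    moreover have "n k1 < n (Suc k1)" using k1 unfolding S_def by simp
    ultimately show False by simp
  qed
  then obtain K where "S \<subseteq> {..<K}" using finite_nat_bounded by blast
  then show ?thesis unfolding S_def by (intro exI[of _ K]) auto
qed

lemma first_diff:
  assumes x: "x \<in> X" and y: "y \<in> X" and ne: "x \<noteq> y"
  shows "\<exists>k. r k x = r k y \<and> r (Suc k) x \<noteq> r (Suc k) y"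
proof -
  obtain m where m: "r m x \<noteq> r m y" using rsep[OF x y ne] by blast
  define m0 where "m0 = (LEAST m. r m x \<noteq> r m y)"
  have m0: "r m0 x \<noteq> r m0 y" unfolding m0_def using m by (rule LeastI)
  have lt: "\<And>i. i < m0 \<Longrightarrow> r i x = r i y" unfolding m0_def using not_less_Least by blast
  have "m0 \<noteq> 0" using m0 r0[OF x] r0[OF y] by (metis)
  then obtain k where "m0 = Suc k" by (cases m0) auto
  then show ?thesis using m0 lt[of k] by auto
qed

lemma LB_level:
  assumes x: "x \<in> X" and y: "y \<in> X" and e: "r k x = r k y" and ne: "r (Suc k) x \<noteq> r (Suc k) y"
  shows "(7/8) * lam n k \<le> \<bar>pp n r x - pp n r y\<bar>"
  using LB[OF assms] LL_props(1)[of k "r k x"] by linarith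

lemma pp_inj: "inj_on (pp n r) X"
proof (rule inj_onI, rule ccontr)
  fix x y assume x: "x \<in> X" and y: "y \<in> X" and eq: "pp n r x = pp n r y" and ne: "x \<noteq> y"
  obtain k where k: "r k x = r k y" "r (Suc k) x \<noteq> r (Suc k) y" using first_diff[OF x y ne] by blast
  show False using LB_level[OF x y k] lam_props(1)[of k] eq by simp
qed

lemma pp_cont: "continuous_on X (pp n r)"
  unfolding continuous_on_iff
proof (intro ballI allI impI)
  fix x e assume x: "x \<in> X" and e: "(0::real) < e"
  obtain k where k: "(1/4)^k < e" using real_arch_pow_inv[OF e, of "1/4"] by auto
  obtain d where d: "d > 0" "\<forall>x\<in>X. \<forall>y\<in>X. dist x y < d \<longrightarrow> r (Suc k) x = r (Suc k) y" using rloc by blast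
  show "\<exists>d>0. \<forall>x'\<in>X. dist x' x < d \<longrightarrow> dist (pp n r x') (pp n r x) < e"
  proof (intro exI[of _ d] conjI ballI impI)
    show "d > 0" by fact
    fix y assume y: "y \<in> X" and dy: "dist y x < d"
    have eq: "r (Suc k) y = r (Suc k) x" using d(2) x y dy by blast
    have "aa n r k y = aa n r k x" using aa_eq[OF y x eq] by simp
    then have "\<bar>pp n r y - pp n r x\<bar> \<le> tau n k" using split_est[OF y x aa_eq[OF y x eq], of ] split_est[OF y x, of k] aa_eq[OF y x eq] by simp
    also have "\<dots> \<le> lam n k"
    proof -
      have "(1::real) \<le> 4^k" by (rule one_le_power) simp
      then have h: "(1::real) \<le> 8 * 4^k" by linarith
      have "lam n k / (8 * 4^k) \<le> lam n k / 1" using lam_props(1)[of k] h by (intro divide_left_mono) auto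
      then show ?thesis unfolding tau_def by simp
    qed
    also have "\<dots> \<le> (1/4)^k" using lam_props(2)[of k] cc_geo[of k] by linarith
    finally show "dist (pp n r y) (pp n r x) < e" using k by (simp add: dist_real_def)
  qed
qed


lemma tau_small: "tau n k \<le> LL n k \<rho> / (real k + 1)"
proof -
  have "k < 2^k" by (rule less_exp)
  moreover have "(2::nat)^k \<le> 4^k" by (rule power_mono) auto
  ultimately have "k + 1 \<le> (4::nat)^k" by linarith
  then have "real k + 1 \<le> 4^k" by (metis of_nat_1 of_nat_add of_nat_le_iff of_nat_numeral of_nat_power)
  then have h: "real k + 1 \<le> 8 * 4^k" by linarith
  have "tau n k \<le> LL n k \<rho> / (8 * 4^k)" unfolding tau_def using LL_props(1)[of k \<rho>] by (intro divide_right_mono) auto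
  also have "\<dots> \<le> LL n k \<rho> / (real k + 1)" using h LL_props(1)[of k \<rho>] lam_props(1)[of k]
    by (intro divide_left_mono) auto
  finally show ?thesis .
qed

lemma qrt: "(real (qq n k) - 1) * rt n k \<le> 1 / (real k + 1)"
proof -
  have q: "real (qq n k) \<ge> 1" using q_props(2)[of k] by simp
  have "(real (qq n k) - 1) * rt n k = (real (qq n k) - 1) / ((real k + 1) * real (qq n k))"
    unfolding rt_def by simp
  also have "\<dots> \<le> real (qq n k) / ((real k + 1) * real (qq n k))" using q by (intro divide_right_mono) auto
  also have "\<dots> = 1 / (real k + 1)" using q by simp
  finally show ?thesis .
qed

lemma pp_deriv:
  assumes x: "x \<in> X" and e: "e > 0"
  shows "\<exists>d>0. \<forall>y\<in>X. \<bar>pp n r y - pp n r x\<bar> < d \<longrightarrow> \<bar>pp n r (T y) - pp n r (T x)\<bar> \<le> e * \<bar>pp n r y - pp n r x\<bar>"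
proof -
  obtain K where K: "\<forall>k\<ge>K. n k < n (Suc k) \<longrightarrow> r k x \<noteq> bb n k" using bad_finite[OF x] by blast
  define k0 where "k0 = K + nat \<lceil>3/e\<rceil>"
  have k0K: "K \<le> k0" unfolding k0_def by simp
  have k0e: "3 / (real k0 + 1) \<le> e"
  proof -
    have "3/e \<le> real k0" unfolding k0_def by linarith
    then have "3/e \<le> real k0 + 1" by linarith
    then have "3 \<le> e * (real k0 + 1)" using e by (simp add: divide_le_eq mult.commute)
    then show ?thesis by (simp add: divide_le_eq mult.commute)
  qed
  define d where "d = (7/8) * lam n k0"
  have d0: "d > 0" unfolding d_def using lam_props(1)[of k0] by simp
  show ?thesis
  proof (intro exI[of _ d] conjI ballI impI)
    show "d > 0" by fact
    fix y assume y: "y \<in> X" and dy: "\<bar>pp n r y - pp n r x\<bar> < d"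
    show "\<bar>pp n r (T y) - pp n r (T x)\<bar> \<le> e * \<bar>pp n r y - pp n r x\<bar>"
    proof (cases "y = x")
      case True then show ?thesis by simp
    next
      case False
      obtain k where k: "r k y = r k x" "r (Suc k) y \<noteq> r (Suc k) x" using first_diff[OF y x False] by blast
      have kk0: "k0 \<le> k"
      proof (rule ccontr)
        assume "\<not> k0 \<le> k"
        then have "lam n k0 \<le> lam n k" using lam_anti by simp
        then have "d \<le> \<bar>pp n r y - pp n r x\<bar>" using LB_level[OF y x k] unfolding d_def by linarith
        then show False using dy by simp
      qed
      have grow: "n k < n (Suc k)"
      proof (rule ccontr)
        assume "\<not> n k < n (Suc k)"
        then have eqn: "n (Suc k) = n k" using n_mono[of k "Suc k"] by simp
        have "r (Suc k) y = r (Suc k) y mod n k" using rlt[OF y, of "Suc k"] eqn by simp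
        also have "\<dots> = r k y" using rcomp[OF y, of k] by simp
        finally have 1: "r (Suc k) y = r k y" .
        have "r (Suc k) x = r (Suc k) x mod n k" using rlt[OF x, of "Suc k"] eqn by simp
        also have "\<dots> = r k x" using rcomp[OF x, of k] by simp
        finally have 2: "r (Suc k) x = r k x" .
        show False using 1 2 k by simp
      qed
      define \<rho> where "\<rho> = r k x"
      have nb: "\<rho> \<noteq> bb n k" unfolding \<rho>_def using K kk0 k0K grow by simp
      have \<rho>lt: "\<rho> < n k" unfolding \<rho>_def using rlt[OF x] .
      have Tk: "r k (T y) = r k (T x)" using rT[OF x, of k] rT[OF y, of k] k(1) by simp
      have Tx: "r k (T x) = (\<rho> + 1) mod n k" unfolding \<rho>_def using rT[OF x] .
      have L0: "0 \<le> LL n k \<rho>" using LL_props(1)[of k \<rho>] lam_props(1)[of k] by linarith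
      have "\<bar>pp n r (T y) - pp n r (T x)\<bar> \<le> (real (qq n k) - 1) * LL n k (r k (T y)) + tau n k"
        using UB[OF TX[OF y] TX[OF x] Tk] .
      also have "LL n k (r k (T y)) = rt n k * LL n k \<rho>" using Tk Tx LL_succ[OF \<rho>lt nb] by simp
      also have "(real (qq n k) - 1) * (rt n k * LL n k \<rho>) = ((real (qq n k) - 1) * rt n k) * LL n k \<rho>" by simp
      also have "\<dots> \<le> (1 / (real k + 1)) * LL n k \<rho>" using qrt[of k] L0 by (rule mult_right_mono)
      finally have U: "\<bar>pp n r (T y) - pp n r (T x)\<bar> \<le> 2 * LL n k \<rho> / (real k + 1)"
        using tau_small[of k \<rho>] by simp
      have Lb: "(7/8) * LL n k \<rho> \<le> \<bar>pp n r y - pp n r x\<bar>" using LB[OF y x k] k(1) unfolding \<rho>_def by simp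
      have "2 * LL n k \<rho> / (real k + 1) \<le> (3 / (real k + 1)) * ((7/8) * LL n k \<rho>)"
        using L0 by (simp add: field_simps)
      also have "\<dots> \<le> (3 / (real k + 1)) * \<bar>pp n r y - pp n r x\<bar>" using Lb by (intro mult_left_mono) auto
      also have "\<dots> \<le> e * \<bar>pp n r y - pp n r x\<bar>"
      proof (rule mult_right_mono)
        have "3 / (real k + 1) \<le> 3 / (real k0 + 1)" using kk0 by (intro divide_left_mono) auto
        then show "3 / (real k + 1) \<le> e" using k0e by linarith
      qed simp
      finally show ?thesis using U by linarith
    qed
  qed
qed

end

lemma extension:
  fixes C :: "real set" and \<phi> :: "real \<Rightarrow> real"
  assumes cC: "compact C" and neC: "C \<noteq> {}"
    and est: "\<forall>x\<in>C. \<forall>e>0. \<exists>d>0. \<forall>y\<in>C. \<bar>y - x\<bar> < d \<longrightarrow> \<bar>\<phi> y - \<phi> x\<bar> \<le> e * \<bar>y - x\<bar>"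
  shows "\<exists>F. (\<forall>x\<in>C. F x = \<phi> x) \<and> (\<forall>x. F differentiable (at x)) \<and> surj F"
  using extF_C[OF cC neC est] extF_diff[OF cC neC est] extF_surj[OF cC neC est] by blast

lemma succ_mod_inj:
  fixes a b N :: nat
  assumes "a < N" "b < N" "(a + 1) mod N = (b + 1) mod N"
  shows "a = b"
proof -
  have h: "(c + 1) mod N = (if c + 1 = N then 0 else c + 1)" if "c < N" for c
    using that by auto
  show ?thesis using assms h[OF assms(1)] h[OF assms(2)] by (auto split: if_splits)
qed

theorem theoremA:
  fixes X :: "'a::metric_space set" and T :: "'a \<Rightarrow> 'a"
  assumes "odometer X T"
  shows "\<exists>(C::real set) (f::real \<Rightarrow> real).
           (\<exists>g. homeomorphism C C f g) \<and>
           (\<exists>h k. homeomorphism X C h k \<and> (\<forall>x\<in>X. h (T x) = f (h x))) \<and>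
           (\<forall>x\<in>C. (f has_field_derivative 0) (at x within C)) \<and>
           (\<forall>x. f differentiable (at x)) \<and> surj f"
proof -
  have cX: "compact X" and cT: "continuous_on X T" using assms unfolding odometer_def dynamical_system_def by auto
  have "\<exists>x\<in>X. regularly_recurrent X T x \<and> closure {(T ^^ n) x | n::nat. True} = X"
    using assms unfolding odometer_def by (rule conjunct2[THEN conjunct2])
  then obtain x0 where x0: "x0 \<in> X" by (elim bexE)
  have neX: "X \<noteq> {}" using x0 by blast
  obtain n :: "nat \<Rightarrow> nat" and r :: "nat \<Rightarrow> 'a \<Rightarrow> nat" where
    A: "n 0 = 1 \<and> (\<forall>k. 1 \<le> n k \<and> n k dvd n (Suc k)) \<and>
     (\<forall>k. \<forall>x\<in>X. r k x < n k \<and> r k x = r (Suc k) x mod n k \<and> r k (T x) = (r k x + 1) mod n k) \<and>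
     (\<forall>k. \<exists>e>0. \<forall>x\<in>X. \<forall>y\<in>X. dist x y < e \<longrightarrow> r k x = r k y) \<and>
     (\<forall>x\<in>X. \<forall>y\<in>X. x \<noteq> y \<longrightarrow> (\<exists>k. r k x \<noteq> r k y)) \<and> T ` X = X"
    using odometer_addresses[OF assms] by (elim exE)
  note A0 = conjunct1[OF A]
  note A1 = conjunct1[OF conjunct2[OF A]]
  note A2 = conjunct1[OF conjunct2[OF conjunct2[OF A]]]
  note A3 = conjunct1[OF conjunct2[OF conjunct2[OF conjunct2[OF A]]]]
  note A4 = conjunct1[OF conjunct2[OF conjunct2[OF conjunct2[OF conjunct2[OF A]]]]]
  note TXX = conjunct2[OF conjunct2[OF conjunct2[OF conjunct2[OF conjunct2[OF A]]]]]
  have H1: "\<And>k. 1 \<le> n k" "\<And>k. n k dvd n (Suc k)" using A1 by blast+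
  have H2: "\<And>k x. x \<in> X \<Longrightarrow> r k x < n k" "\<And>k x. x\<in>X \<Longrightarrow> r k x = r (Suc k) x mod n k"
    "\<And>k x. x\<in>X \<Longrightarrow> r k (T x) = (r k x + 1) mod n k" using A2 by blast+
  have H3: "\<And>k. \<exists>e>0. \<forall>x\<in>X. \<forall>y\<in>X. dist x y < e \<longrightarrow> r k x = r k y" using A3 by blast
  have H4: "\<And>x y. x\<in>X \<Longrightarrow> y\<in>X \<Longrightarrow> x \<noteq> y \<Longrightarrow> \<exists>k. r k x \<noteq> r k y" using A4 by blast
  have H5: "\<And>x. x\<in>X \<Longrightarrow> T x \<in> X" using TXX by auto
  note HH = A0 H1 H2 H3 H4 H5
  define p where "p = pp n r"
  define C where "C = p ` X"
  have pinj: "inj_on p X" unfolding p_def by (rule pp_inj[OF HH])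
  have pcont: "continuous_on X p" unfolding p_def by (rule pp_cont[OF HH])
  have cC: "compact C" unfolding C_def using compact_continuous_image[OF pcont cX] .
  have neC: "C \<noteq> {}" unfolding C_def using neX by simp
  obtain pinv where hp: "homeomorphism X C p pinv" using homeomorphism_compact[OF cX pcont C_def[symmetric] pinj] by blast
  have Tinj: "inj_on T X"
  proof (rule inj_onI, rule ccontr)
    fix x y assume x: "x \<in> X" and y: "y \<in> X" and e: "T x = T y" and ne: "x \<noteq> y"
    obtain k where k: "r k x \<noteq> r k y" using H4[OF x y ne] by blast
    have "(r k x + 1) mod n k = (r k y + 1) mod n k" using H2(3)[OF x, of k] H2(3)[OF y, of k] e by simp
    then have "r k x = r k y" using succ_mod_inj H2(1)[OF x] H2(1)[OF y] by blast
    then show False using k by simp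
  qed
  obtain Tinv where hT: "homeomorphism X X T Tinv" using homeomorphism_compact[OF cX cT TXX Tinj] by blast
  have hpi: "homeomorphism C X pinv p" using hp by (rule homeomorphism_symD)
  have hphi: "homeomorphism C C (p \<circ> (T \<circ> pinv)) ((p \<circ> Tinv) \<circ> pinv)"
    using homeomorphism_compose[OF homeomorphism_compose[OF hpi hT] hp] .
  define \<phi> where "\<phi> = p \<circ> (T \<circ> pinv)"
  have pinvp: "\<And>x. x \<in> X \<Longrightarrow> pinv (p x) = x" using hp unfolding homeomorphism_def by auto
  have phip: "\<And>x. x \<in> X \<Longrightarrow> \<phi> (p x) = p (T x)" unfolding \<phi>_def using pinvp by simp
  have est: "\<forall>y0\<in>C. \<forall>e>0. \<exists>d>0. \<forall>y\<in>C. \<bar>y - y0\<bar> < d \<longrightarrow> \<bar>\<phi> y - \<phi> y0\<bar> \<le> e * \<bar>y - y0\<bar>"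
  proof (intro ballI allI impI)
    fix y0 e assume y0: "y0 \<in> C" and e: "(e::real) > 0"
    obtain x where x: "x \<in> X" "y0 = p x" using y0 unfolding C_def by blast
    obtain d where d: "d > 0" "\<forall>y\<in>X. \<bar>pp n r y - pp n r x\<bar> < d \<longrightarrow> \<bar>pp n r (T y) - pp n r (T x)\<bar> \<le> e * \<bar>pp n r y - pp n r x\<bar>"
      using pp_deriv[OF HH x(1) e] by blast
    show "\<exists>d>0. \<forall>y\<in>C. \<bar>y - y0\<bar> < d \<longrightarrow> \<bar>\<phi> y - \<phi> y0\<bar> \<le> e * \<bar>y - y0\<bar>"
    proof (intro exI[of _ d] conjI ballI impI)
      show "d > 0" by fact
      fix y assume y: "y \<in> C" and dy: "\<bar>y - y0\<bar> < d"
      obtain z where z: "z \<in> X" "y = p z" using y unfolding C_def by blast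
      show "\<bar>\<phi> y - \<phi> y0\<bar> \<le> e * \<bar>y - y0\<bar>" using d(2) z x dy phip unfolding p_def by auto
    qed
  qed
  obtain F where F: "\<forall>x\<in>C. F x = \<phi> x" "\<forall>x. F differentiable (at x)" "surj F"
    using extension[OF cC neC est] by blast
  have hF: "homeomorphism C C F ((p \<circ> Tinv) \<circ> pinv)"
  proof (rule homeomorphism_cong[OF hphi])
    fix x assume "x \<in> C"
    then show "F x = (p \<circ> (T \<circ> pinv)) x" using F(1) unfolding \<phi>_def by blast
  qed auto
  have conj: "\<forall>x\<in>X. p (T x) = F (p x)" using F(1) phip unfolding C_def by auto
  have der: "\<forall>x\<in>C. (F has_field_derivative 0) (at x within C)"
  proof
    fix x assume x: "x \<in> C"
    show "(F has_field_derivative 0) (at x within C)"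
    proof (rule deriv0_from_est, intro allI impI)
      fix e :: real assume "e > 0"
      then obtain d where "d > 0" "\<forall>y\<in>C. \<bar>y - x\<bar> < d \<longrightarrow> \<bar>\<phi> y - \<phi> x\<bar> \<le> e * \<bar>y - x\<bar>" using est x by blast
      then show "\<exists>d>0. \<forall>y\<in>C. \<bar>y - x\<bar> < d \<longrightarrow> \<bar>F y - F x\<bar> \<le> e * \<bar>y - x\<bar>" using F(1) x by auto
    qed
  qed
  show ?thesis using hF hp conj der F(2,3) by blast
qed

end
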